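(* Let $n\in\mathbb N$, let $A$ be a Young function satisfying (C1), (C2), (C3), and let $\varphi$ be a gauge function. Then $\psi(st)\le\varphi(t)+t^nB(s)$ for all $s,t>0$.
   Context: A gauge function is a function $\varphi\colon[0,\infty)\to[0,\infty)$ that is increasing, continuous and vanishes only at $0$, and (standing assumption) such that $r\mapsto\varphi(r)/r^n$ is non-increasing on $(0,\infty)$. A Young function is a non-trivial convex $A\colon[0,\infty)\to[0,\infty]$ with $A(0)=0$; $\widetilde A(t)=\sup_{\tau\ge0}(\tau t-A(\tau))$. Conditions: (C1) if $n=1$, $\lim_{t\to\infty}t/A(t)=0$; if $n\ge2$, $\int^\infty (t/A(t))^{1/(n-1)}dt<\infty$. (C2) $0<A(t)<\infty$ for $t>0$. (C3) if $n=1$, $\lim_{t\to0^+}t/A(t)=\infty$; if $n\ge2$, $\int_0(t/A(t))^{1/(n-1)}dt=\infty$. $B=A$ if $n=1$; for $n\ge2$, $B$ is the Young conjugate of $t\mapsto t^{n'}\int_t^\infty\widetilde A(s)s^{-1-n'}ds$, $n'=n/(n-1)$. $J(0)=0$, $J(s)=s\,B^{-1}(\varphi(s)/s^n)$ for $s>0$ (an increasing bijection of $[0,\infty)$), and $\psi(r)=\varphi(J^{-1}(r))$ for $r\ge0$. *)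

theory Defs
  imports "HOL-Analysis.Analysis"
begin

definition gauge_function :: "nat \<Rightarrow> (real \<Rightarrow> real) \<Rightarrow> bool" where
  "gauge_function n \<phi> \<longleftrightarrow>
     mono_on {0..} \<phi> \<and> continuous_on {0..} \<phi> \<and> \<phi> 0 = 0 \<and>
     (\<forall>r>0. 0 < \<phi> r) \<and>
     (\<forall>r1 r2. 0 < r1 \<and> r1 \<le> r2 \<longrightarrow> \<phi> r2 / r2 ^ n \<le> \<phi> r1 / r1 ^ n)"

text \<open>Young function, real-valued on [0,oo) (infinite values are excluded by (C2) anyway).\<close>
definition young_function :: "(real \<Rightarrow> real) \<Rightarrow> bool" where
  "young_function A \<longleftrightarrow> convex_on {0..} A \<and> A 0 = 0 \<and> (\<forall>t\<ge>0. 0 \<le> A t) \<and>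
     (\<exists>t>0. A t \<noteq> 0)"

definition young_conj :: "(real \<Rightarrow> ennreal) \<Rightarrow> real \<Rightarrow> ennreal" where
  "young_conj F t = (SUP \<tau>\<in>{0..}. ennreal (\<tau> * t) - F \<tau>)"

definition cond_C1 :: "nat \<Rightarrow> (real \<Rightarrow> real) \<Rightarrow> bool" where
  "cond_C1 n A \<longleftrightarrow>
     (if n = 1 then ((\<lambda>t. t / A t) \<longlongrightarrow> 0) at_top
      else (\<integral>\<^sup>+ t\<in>{1..}. ennreal ((t / A t) powr (1 / (real n - 1))) \<partial>lborel) < \<infinity>)"

definition cond_C2 :: "(real \<Rightarrow> real) \<Rightarrow> bool" where
  "cond_C2 A \<longleftrightarrow> (\<forall>t>0. 0 < A t)"

definition cond_C3 :: "nat \<Rightarrow> (real \<Rightarrow> real) \<Rightarrow> bool" where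
  "cond_C3 n A \<longleftrightarrow>
     (if n = 1 then filterlim (\<lambda>t. t / A t) at_top (at_right 0)
      else (\<integral>\<^sup>+ t\<in>{0<..1}. ennreal ((t / A t) powr (1 / (real n - 1))) \<partial>lborel) = \<infinity>)"

definition conj_exp :: "nat \<Rightarrow> real" where
  "conj_exp n = real n / (real n - 1)"

definition funB :: "nat \<Rightarrow> (real \<Rightarrow> real) \<Rightarrow> real \<Rightarrow> ennreal" where
  "funB n A =
     (if n = 1 then (\<lambda>t. ennreal (A t))
      else young_conj (\<lambda>t. ennreal (t powr conj_exp n) *
              (\<integral>\<^sup>+ s\<in>{t..}. young_conj (\<lambda>\<tau>. ennreal (A \<tau>)) s
                    * ennreal (s powr (-1 - conj_exp n)) \<partial>lborel)))"

definition funB_inv :: "nat \<Rightarrow> (real \<Rightarrow> real) \<Rightarrow> real \<Rightarrow> real" where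
  "funB_inv n A r = Sup {t. 0 \<le> t \<and> funB n A t \<le> ennreal r}"

definition funJ :: "nat \<Rightarrow> (real \<Rightarrow> real) \<Rightarrow> (real \<Rightarrow> real) \<Rightarrow> real \<Rightarrow> real" where
  "funJ n A \<phi> s = (if s = 0 then 0 else s * funB_inv n A (\<phi> s / s ^ n))"

definition funPsi :: "nat \<Rightarrow> (real \<Rightarrow> real) \<Rightarrow> (real \<Rightarrow> real) \<Rightarrow> real \<Rightarrow> real" where
  "funPsi n A \<phi> r = \<phi> (THE s. 0 \<le> s \<and> funJ n A \<phi> s = r)"

end

theory Submission
  imports Defs
begin

lemma core:
  fixes n :: nat and A \<phi> Bf :: "real \<Rightarrow> real"
  assumes n1: "n \<ge> 1"
    and gauge: "gauge_function n \<phi>"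
    and Bf: "\<And>t. t \<ge> 0 \<Longrightarrow> funB n A t = ennreal (Bf t)"
    and Bnn: "\<And>t. t \<ge> 0 \<Longrightarrow> Bf t \<ge> 0"
    and B0: "Bf 0 = 0"
    and Bcont: "continuous_on {0..} Bf"
    and scale: "\<And>x y. 0 < x \<Longrightarrow> x \<le> y \<Longrightarrow> Bf x * y ^ n \<le> x ^ n * Bf y"
    and strict: "\<And>x y. 0 < x \<Longrightarrow> x < y \<Longrightarrow> Bf y > 0 \<Longrightarrow> Bf x * y ^ n < x ^ n * Bf y"
    and pos: "\<exists>y>0. Bf y > 0"
    and small: "((\<lambda>b. Bf b / b ^ n) \<longlongrightarrow> 0) (at_right 0)"
  shows "\<forall>s t. 0 < s \<and> 0 < t \<longrightarrow>
           ennreal (funPsi n A \<phi> (s * t)) \<le> ennreal (\<phi> t) + ennreal (t ^ n) * funB n A s"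
proof -
  from gauge have phimono: "mono_on {0..} \<phi>" and phicont: "continuous_on {0..} \<phi>"
    and phi0: "\<phi> 0 = 0" and phipos: "\<And>r. r > 0 \<Longrightarrow> \<phi> r > 0"
    and phidec: "\<And>r1 r2. 0 < r1 \<Longrightarrow> r1 \<le> r2 \<Longrightarrow> \<phi> r2 / r2 ^ n \<le> \<phi> r1 / r1 ^ n"
    unfolding gauge_function_def by auto
  obtain y0 where y0: "y0 > 0" "Bf y0 > 0" using pos by auto
  define Binv where "Binv = funB_inv n A"
  have Bmono: "Bf x \<le> Bf y" if "0 \<le> x" "x \<le> y" for x y
  proof (cases "x = 0")
    case True thus ?thesis using B0 Bnn that by auto
  next
    case False
    hence x: "x > 0" using that by auto
    have "Bf x * y ^ n \<le> x ^ n * Bf y" using scale x that by auto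
    also have "\<dots> \<le> y ^ n * Bf y" using Bnn[of y] that x
      by (intro mult_right_mono power_mono) auto
    finally show ?thesis using x that by (simp add: mult.commute)
  qed
  have Bstrict: "Bf x < Bf y" if "0 < x" "x < y" "Bf y > 0" for x y
  proof -
    have "Bf x * y ^ n < x ^ n * Bf y" using strict that by auto
    also have "\<dots> \<le> y ^ n * Bf y" using that
      by (intro mult_right_mono power_mono) auto
    finally show ?thesis using that by (simp add: mult.commute)
  qed
  have Bpow: "Bf y0 * (b / y0) ^ n \<le> Bf b" if "b \<ge> y0" for b
  proof -
    have "Bf y0 * b ^ n \<le> y0 ^ n * Bf b" using scale[of y0 b] that y0 by auto
    thus ?thesis using y0 by (simp add: field_simps power_divide)
  qed
  have Blow: "Bf y0 * b / y0 \<le> Bf b" if "b \<ge> y0" for b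
  proof -
    have "Bf y0 * b ^ n \<le> y0 ^ n * Bf b" using scale[of y0 b] that y0 by auto
    hence 1: "Bf y0 * (b / y0) ^ n \<le> Bf b" using y0 by (simp add: field_simps power_divide)
    have 2: "b / y0 \<le> (b / y0) ^ n" using that y0 n1
      by (metis One_nat_def le_divide_eq_1_pos power_increasing power_one_right)
    have "Bf y0 * b / y0 = Bf y0 * (b / y0)" by simp
    also have "\<dots> \<le> Bf y0 * (b / y0) ^ n" using y0 2 by (intro mult_left_mono) auto
    finally show ?thesis using 1 by simp
  qed
  have Binv_prop: "Bf (Binv r) = r \<and> Binv r > 0" if r: "r > 0" for r
  proof -
    define S where "S = {t. 0 \<le> t \<and> funB n A t \<le> ennreal r}"
    have "S = {t. 0 \<le> t \<and> Bf t \<le> r}"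
      unfolding S_def
    proof (intro Collect_cong)
      fix t
      show "(0 \<le> t \<and> funB n A t \<le> ennreal r) = (0 \<le> t \<and> Bf t \<le> r)"
      proof (cases "0 \<le> t")
        case True thus ?thesis using Bf[OF True] ennreal_le_iff[of r "Bf t"] r by simp
      qed simp
    qed
    hence S: "S = {0..} \<inter> Bf -` {..r}" by auto
    have "0 \<in> S" using S B0 r by auto
    have bdd: "t \<le> max y0 (r * y0 / Bf y0)" if "t \<in> S" for t
    proof (cases "t \<le> y0")
      case False
      hence "Bf y0 * t / y0 \<le> r" using Blow[of t] that S by auto
      hence "t \<le> r * y0 / Bf y0" using y0 by (simp add: field_simps)
      thus ?thesis by simp
    qed simp
    have bddS: "bdd_above S" using bdd by (intro bdd_aboveI[of _ "max y0 (r * y0 / Bf y0)"]) auto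
    have cl: "closed S" unfolding S
      by (rule continuous_closed_preimage[OF Bcont]) auto
    have SupS: "Sup S \<in> S" using closed_contains_Sup[of S] \<open>0 \<in> S\<close> bddS cl
      by blast
    have bS: "Binv r = Sup S" unfolding Binv_def funB_inv_def S_def by simp
    have b0: "Binv r \<ge> 0" using SupS bS S by auto
    have le: "Bf (Binv r) \<le> r" using SupS bS S by auto
    have gt: "Bf x > r" if "x > Binv r" for x
    proof (rule ccontr)
      assume "\<not> Bf x > r"
      hence "x \<in> S" using S that b0 by auto
      hence "x \<le> Sup S" using cSup_upper[of x S] bddS by blast
      thus False using that bS by simp
    qed
    have "(Bf \<longlongrightarrow> Bf (Binv r)) (at (Binv r) within {0..})"
      using Bcont b0 by (simp add: continuous_on_def)
    hence "(Bf \<longlongrightarrow> Bf (Binv r)) (at_right (Binv r))"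
      by (rule tendsto_within_subset) (use b0 in auto)
    moreover have "eventually (\<lambda>x. r \<le> Bf x) (at_right (Binv r))"
      using gt by (auto simp: eventually_at_right_field intro!: exI[of _ "Binv r + 1"] less_imp_le)
    ultimately have "r \<le> Bf (Binv r)"
      by (intro tendsto_lowerbound) auto
    hence eq: "Bf (Binv r) = r" using le by simp
    have "Binv r \<noteq> 0" using eq B0 r by auto
    thus ?thesis using eq b0 by simp
  qed
  have Binv_inv: "Binv (Bf b) = b" if "b > 0" "Bf b > 0" for b
  proof -
    have 1: "Bf (Binv (Bf b)) = Bf b" "Binv (Bf b) > 0" using Binv_prop[of "Bf b"] that by auto
    show ?thesis
    proof (rule ccontr)
      assume "Binv (Bf b) \<noteq> b"
      hence "Binv (Bf b) < b \<or> b < Binv (Bf b)" by auto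
      thus False using Bstrict[of "Binv (Bf b)" b] Bstrict[of b "Binv (Bf b)"] 1 that by auto
    qed
  qed
  have Binv_cont: "isCont Binv r0" if r0: "r0 > 0" for r0
  proof -
    define c where "c = Binv (r0/2)"
    define d where "d = Binv (2*r0)"
    have c: "Bf c = r0/2" "c > 0" using Binv_prop[of "r0/2"] r0 c_def by auto
    have d: "Bf d = 2*r0" "d > 0" using Binv_prop[of "2*r0"] r0 d_def by auto
    have cd: "c \<le> d"
    proof (rule ccontr)
      assume "\<not> c \<le> d"
      hence "Bf d \<le> Bf c" using Bmono[of d c] d by auto
      thus False using c d r0 by auto
    qed
    have "continuous_on {c..d} Bf" by (rule continuous_on_subset[OF Bcont]) (use c in auto)
    moreover have "\<forall>x\<in>{c..d}. Binv (Bf x) = x"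
    proof
      fix x assume x: "x \<in> {c..d}"
      have "Bf c \<le> Bf x" using Bmono[of c x] x c by auto
      thus "Binv (Bf x) = x" using Binv_inv[of x] x c r0 by auto
    qed
    ultimately have co: "continuous_on (Bf ` {c..d}) Binv"
      by (intro continuous_on_inv) auto
    have sub: "{r0/2<..<2*r0} \<subseteq> Bf ` {c..d}"
    proof
      fix r assume r: "r \<in> {r0/2<..<2*r0}"
      have "\<exists>x. c \<le> x \<and> x \<le> d \<and> Bf x = r"
        using r c d cd by (intro IVT' continuous_on_subset[OF Bcont]) auto
      thus "r \<in> Bf ` {c..d}" by auto
    qed
    have "continuous_on {r0/2<..<2*r0} Binv" using co sub by (rule continuous_on_subset)
    thus ?thesis using r0 by (subst (asm) continuous_on_eq_continuous_at) auto
  qed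
  define J' where "J' = (\<lambda>u. u * Binv (\<phi> u / u ^ n))"
  have JJ: "funJ n A \<phi> u = J' u" if "u > 0" for u
    using that unfolding funJ_def J'_def Binv_def by auto
  have bprop: "Bf (Binv (\<phi> u / u ^ n)) = \<phi> u / u ^ n \<and> Binv (\<phi> u / u ^ n) > 0" if "u > 0" for u
    using Binv_prop[of "\<phi> u / u ^ n"] phipos[of u] that by auto
  have phi_isCont: "isCont \<phi> u" if "u > 0" for u
    using continuous_on_interior[OF phicont, of u] that by auto
  have Jcont: "continuous_on {0<..} J'"
  proof (intro continuous_at_imp_continuous_on ballI)
    fix u :: real assume "u \<in> {0<..}"
    hence u: "u > 0" by auto
    have "isCont (\<lambda>u. \<phi> u / u ^ n) u" using u phi_isCont[OF u] by (intro continuous_intros) auto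
    moreover have "isCont Binv (\<phi> u / u ^ n)" using u phipos[OF u] by (intro Binv_cont) auto
    ultimately have "isCont (\<lambda>u. Binv (\<phi> u / u ^ n)) u" by (rule isCont_o2)
    thus "isCont J' u" unfolding J'_def by (intro continuous_intros)
  qed
  have Jpos: "J' u > 0" if "u > 0" for u using bprop[OF that] that unfolding J'_def by auto
  have exist: "\<exists>u>0. J' u = R" if R: "R > 0" for R
  proof -
    define K where "K = y0 ^ n / Bf y0"
    have K: "K > 0" using y0 unfolding K_def by auto
    have "(\<phi> \<longlongrightarrow> \<phi> 0) (at 0 within {0..})"
      using continuous_on_def[THEN iffD1, OF phicont, rule_format, of 0] by simp
    hence "(\<phi> \<longlongrightarrow> 0) (at 0 within {0<..})" unfolding phi0
      by (rule tendsto_within_subset) auto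
    hence lim0: "((\<lambda>u. (u*y0)^n + \<phi> u * K) \<longlongrightarrow> (0*y0)^n + 0 * K) (at_right 0)"
      by (intro tendsto_add tendsto_power tendsto_mult tendsto_ident_at tendsto_const)
    have z: "(0*y0)^n + 0 * K = (0::real)" using n1 by simp
    have "((\<lambda>u. (u*y0)^n + \<phi> u * K) \<longlongrightarrow> 0) (at_right 0)" using lim0 unfolding z .
    hence "eventually (\<lambda>u. (u*y0)^n + \<phi> u * K < R ^ n) (at_right 0)"
      by (rule order_tendstoD(2)) (use R in simp)
    then obtain e where e: "e > 0" "\<And>u. u > 0 \<Longrightarrow> u < e \<Longrightarrow> (u*y0)^n + \<phi> u * K < R ^ n"
      by (auto simp: eventually_at_right_field)
    define u1 where "u1 = min (e/2) (1/2)"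
    have u1a: "u1 > 0" "u1 < 1" "u1 < e" using e(1) unfolding u1_def by auto
    have u1: "u1 > 0" "u1 < 1" "(u1*y0)^n + \<phi> u1 * K < R ^ n" using u1a e(2)[of u1] by auto
    define b1 where "b1 = Binv (\<phi> u1 / u1 ^ n)"
    have b1: "Bf b1 = \<phi> u1 / u1 ^ n" "b1 > 0" using bprop[of u1] u1 b1_def by auto
    have "J' u1 ^ n \<le> (u1*y0)^n + \<phi> u1 * K"
    proof (cases "b1 < y0")
      case True
      have "J' u1 ^ n \<le> (u1*y0)^n" unfolding J'_def b1_def[symmetric]
        using True u1 b1 by (intro power_mono) auto
      moreover have "\<phi> u1 * K \<ge> 0" using phipos[of u1] u1 K by auto
      ultimately show ?thesis by linarith
    next
      case False
      have "Bf y0 * (b1 / y0) ^ n \<le> Bf b1" using Bpow False by auto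
      hence "Bf y0 * b1 ^ n \<le> Bf b1 * y0 ^ n" using y0 by (simp add: power_divide divide_le_eq mult.commute)
      hence "b1 ^ n \<le> Bf b1 * K" using y0 unfolding K_def by (simp add: le_divide_eq mult.commute)
      hence "u1 ^ n * b1 ^ n \<le> u1 ^ n * (Bf b1 * K)" using u1 by (intro mult_left_mono) auto
      also have "\<dots> = \<phi> u1 * K" using b1 u1 by simp
      finally have "J' u1 ^ n \<le> \<phi> u1 * K" unfolding J'_def b1_def[symmetric] by (simp add: power_mult_distrib)
      moreover have "(u1*y0)^n \<ge> 0" using u1 y0 by auto
      ultimately show ?thesis by linarith
    qed
    hence "J' u1 ^ n < R ^ n" using u1 by linarith
    hence J1: "J' u1 < R" by (rule power_less_imp_less_base) (use R in auto)
    have "\<exists>u\<ge>1. J' u \<ge> R"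
    proof (rule ccontr)
      assume "\<not> ?thesis"
      hence lt: "\<And>u. u \<ge> 1 \<Longrightarrow> J' u < R" by auto
      define bb where "bb = (\<lambda>u. Binv (\<phi> u / u ^ n))"
      have bbp: "Bf (bb u) = \<phi> u / u ^ n" "bb u > 0" if "u \<ge> 1" for u
        using bprop[of u] that unfolding bb_def by auto
      have limR: "((\<lambda>u. R / u) \<longlongrightarrow> 0) at_top"
        by (intro tendsto_divide_0[OF tendsto_const] filterlim_at_top_imp_at_infinity[OF filterlim_ident])
      have evu: "eventually (\<lambda>u. bb u \<le> R / u) at_top"
        using eventually_ge_at_top[of 1]
      proof eventually_elim
        case (elim u)
        have "u * bb u < R" using lt[OF elim] unfolding J'_def bb_def by auto
        thus ?case using elim by (simp add: field_simps)
      qed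
      have evl: "eventually (\<lambda>u. 0 \<le> bb u) at_top"
        using eventually_ge_at_top[of 1]
      proof eventually_elim
        case (elim u) show ?case using bbp(2)[OF elim] by simp
      qed
      have "(bb \<longlongrightarrow> 0) at_top"
        by (rule tendsto_sandwich[OF evl evu tendsto_const limR])
      moreover have "eventually (\<lambda>u. bb u > 0) at_top"
        using eventually_ge_at_top[of 1]
      proof eventually_elim
        case (elim u) show ?case using bbp(2)[OF elim] by simp
      qed
      ultimately have "filterlim bb (at_right 0) at_top" by (rule tendsto_imp_filterlim_at_right)
      from filterlim_compose[OF small this]
      have lim: "((\<lambda>u. Bf (bb u) / bb u ^ n) \<longlongrightarrow> 0) at_top" .
      have "eventually (\<lambda>u. \<phi> 1 / R ^ n \<le> Bf (bb u) / bb u ^ n) at_top"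
        using eventually_ge_at_top[of 1]
      proof eventually_elim
        case (elim u)
        have Ju: "J' u = u * bb u" unfolding J'_def bb_def by simp
        have "Bf (bb u) / bb u ^ n = \<phi> u / (u * bb u) ^ n"
          using bbp[OF elim] elim by (simp add: power_mult_distrib)
        also have "\<dots> = \<phi> u / J' u ^ n" using Ju by simp
        also have "\<dots> \<ge> \<phi> 1 / R ^ n"
        proof (rule frac_le)
          show "0 \<le> \<phi> u" using phipos[of u] elim by auto
          show "\<phi> 1 \<le> \<phi> u" using phimono elim by (auto simp: mono_on_def)
          show "0 < J' u ^ n" using Jpos[of u] elim by auto
          show "J' u ^ n \<le> R ^ n" using lt[OF elim] Jpos[of u] elim by (intro power_mono) auto
        qed
        finally show ?case .
      qed
      hence "\<phi> 1 / R ^ n \<le> 0" by (rule tendsto_lowerbound[OF lim]) simp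
      moreover have "\<phi> 1 / R ^ n > 0" using phipos[of 1] R by auto
      ultimately show False by simp
    qed
    then obtain u2 where u2: "u2 \<ge> 1" "J' u2 \<ge> R" by auto
    have "\<exists>u. u1 \<le> u \<and> u \<le> u2 \<and> J' u = R"
      using J1 u1 u2 by (intro IVT' continuous_on_subset[OF Jcont]) auto
    then obtain u where "u1 \<le> u" "J' u = R" by blast
    thus ?thesis using u1(1) by (intro exI[of _ u]) auto
  qed
  have uniq: "u1 = u2" if "u1 > 0" "u2 > 0" "J' u1 = R" "J' u2 = R" for u1 u2 R
  proof (rule ccontr)
    assume ne: "u1 \<noteq> u2"
    have main: False if u: "v1 > 0" "v1 < v2" "J' v1 = J' v2" for v1 v2
    proof -
      define b1 where "b1 = Binv (\<phi> v1 / v1 ^ n)"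
      define b2 where "b2 = Binv (\<phi> v2 / v2 ^ n)"
      have b1: "Bf b1 = \<phi> v1 / v1 ^ n" "b1 > 0" using bprop[of v1] u b1_def by auto
      have b2: "Bf b2 = \<phi> v2 / v2 ^ n" "b2 > 0" using bprop[of v2] u b2_def by auto
      have eq: "v1 * b1 = v2 * b2" using u unfolding J'_def b1_def b2_def by simp
      have "b2 < b1"
      proof (rule ccontr)
        assume "\<not> b2 < b1"
        hence "v1 * b1 < v2 * b2" using u b1 b2
          by (meson mult_less_le_imp_less not_less order_less_imp_le)
        thus False using eq by simp
      qed
      have ph: "\<phi> v1 \<le> \<phi> v2" using phimono u by (auto simp: mono_on_def)
      have p1: "\<phi> v1 = v1 ^ n * Bf b1" "\<phi> v2 = v2 ^ n * Bf b2" using b1 b2 u by auto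
      have "Bf b1 > 0" using b1(1) phipos[of v1] u(1) by simp
      hence "Bf b2 * b1 ^ n < b2 ^ n * Bf b1" using strict[of b2 b1] b2(2) \<open>b2 < b1\<close> by blast
      hence "v2 ^ n * (Bf b2 * b1 ^ n) < v2 ^ n * (b2 ^ n * Bf b1)" using u by auto
      also have "\<dots> = (v2 * b2) ^ n * Bf b1" by (simp add: power_mult_distrib)
      also have "\<dots> = (v1 * b1) ^ n * Bf b1" using eq by simp
      also have "\<dots> = \<phi> v1 * b1 ^ n" using p1 by (simp add: power_mult_distrib)
      also have "\<dots> \<le> \<phi> v2 * b1 ^ n" using ph b1 by (intro mult_right_mono) auto
      also have "\<dots> = v2 ^ n * (Bf b2 * b1 ^ n)" using p1 by simp
      finally show False by simp
    qed
    show False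
    proof (cases "u1 < u2")
      case True thus ?thesis using main[of u1 u2] that by auto
    next
      case False thus ?thesis using main[of u2 u1] that ne by auto
    qed
  qed
  show ?thesis
  proof (intro allI impI)
    fix s t :: real assume st: "0 < s \<and> 0 < t"
    define R where "R = s * t"
    have R: "R > 0" using st R_def by auto
    obtain u where u: "u > 0" "J' u = R" using exist[OF R] by auto
    have the: "(THE v. 0 \<le> v \<and> funJ n A \<phi> v = R) = u"
    proof (rule the_equality)
      show "0 \<le> u \<and> funJ n A \<phi> u = R" using u JJ by auto
      fix v assume v: "0 \<le> v \<and> funJ n A \<phi> v = R"
      have "v \<noteq> 0" using v R unfolding funJ_def by auto
      hence "v > 0" using v by auto
      thus "v = u" using uniq[of v u R] u v JJ by auto
    qed
    have psi: "funPsi n A \<phi> R = \<phi> u" unfolding funPsi_def the ..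
    have "\<phi> u \<le> \<phi> t + t ^ n * Bf s"
    proof (cases "u \<le> t")
      case True
      have "\<phi> u \<le> \<phi> t" using phimono True u by (auto simp: mono_on_def)
      moreover have "t ^ n * Bf s \<ge> 0" using Bnn[of s] st by auto
      ultimately show ?thesis by linarith
    next
      case False
      define b where "b = Binv (\<phi> u / u ^ n)"
      have b: "Bf b = \<phi> u / u ^ n" "b > 0" using bprop[of u] u b_def by auto
      have ub: "u * b = s * t" using u R_def unfolding J'_def b_def by simp
      have "b < s"
      proof (rule ccontr)
        assume "\<not> b < s"
        hence "t * s < u * b" using False st by (intro mult_less_le_imp_less) auto
        thus False using ub by (simp add: mult.commute)
      qed
      have "Bf b * s ^ n \<le> b ^ n * Bf s" using scale[of b s] b \<open>b < s\<close> by auto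
      hence "u ^ n * (Bf b * s ^ n) \<le> u ^ n * (b ^ n * Bf s)" using u by (intro mult_left_mono) auto
      hence "\<phi> u * s ^ n \<le> (u * b) ^ n * Bf s" using b u by (simp add: power_mult_distrib)
      also have "\<dots> = (t ^ n * Bf s) * s ^ n" using ub by (simp add: power_mult_distrib)
      finally have "\<phi> u \<le> t ^ n * Bf s" using st by simp
      moreover have "\<phi> t \<ge> 0" using phipos[of t] st by auto
      ultimately show ?thesis by linarith
    qed
    hence "ennreal (\<phi> u) \<le> ennreal (\<phi> t + t ^ n * Bf s)" by (rule ennreal_leI)
    also have "\<dots> = ennreal (\<phi> t) + ennreal (t ^ n) * ennreal (Bf s)"
      using phipos[of t] st Bnn[of s] by (simp add: ennreal_plus ennreal_mult)
    finally show "ennreal (funPsi n A \<phi> (s * t)) \<le> ennreal (\<phi> t) + ennreal (t ^ n) * funB n A s"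
      using psi Bf[of s] st R_def by simp
  qed
qed


lemma young_basic:
  assumes "young_function A"
  shows "convex_on {0..} A" "A 0 = 0" "\<And>t. t \<ge> 0 \<Longrightarrow> A t \<ge> 0"
  using assms unfolding young_function_def by auto

lemma young_le_lin:
  assumes "young_function A" "0 \<le> x" "x \<le> y" "y > 0"
  shows "A x * y \<le> x * A y"
proof -
  have c: "convex_on {0..} A" and A0: "A 0 = 0" using young_basic[OF assms(1)] by auto
  have "A ((1 - x/y) *\<^sub>R 0 + (x/y) *\<^sub>R y) \<le> (1 - x/y) * A 0 + (x/y) * A y"
    using assms by (intro convex_onD[OF c]) auto
  hence "A x \<le> (x/y) * A y" using A0 assms by simp
  thus ?thesis using assms by (simp add: field_simps)
qed

lemma young_cont:
  assumes "young_function A"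
  shows "continuous_on {0..} A"
proof -
  have c: "convex_on {0..} A" and A0: "A 0 = 0" and nn: "\<And>t. t \<ge> 0 \<Longrightarrow> A t \<ge> 0"
    using young_basic[OF assms] by auto
  have "convex_on {0<..} A" using c by (rule convex_on_subset) auto
  hence co: "continuous_on {0<..} A" by (intro convex_on_continuous) auto
  show ?thesis
    unfolding continuous_on_eq_continuous_within
  proof
    fix x :: real assume x: "x \<in> {0..}"
    show "continuous (at x within {0..}) A"
    proof (cases "x = 0")
      case False
      hence "isCont A x" using co x by (subst (asm) continuous_on_eq_continuous_at) auto
      thus ?thesis by (rule continuous_at_imp_continuous_within)
    next
      case True
      have "((\<lambda>t. t * A 1) \<longlongrightarrow> 0 * A 1) (at 0 within {0..})"
        by (intro tendsto_intros)
      hence lim: "((\<lambda>t. t * A 1) \<longlongrightarrow> 0) (at 0 within {0..})" by simp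
      have "eventually (\<lambda>t. t \<in> {-1<..<1}) (nhds (0::real))"
        by (rule eventually_nhds_in_open) auto
      hence ev: "eventually (\<lambda>t. A t \<le> t * A 1) (at 0 within {0..})"
        unfolding eventually_at_filter
        by eventually_elim (use young_le_lin[OF assms, of _ 1] in auto)
      have ev2: "eventually (\<lambda>t. 0 \<le> A t) (at 0 within {0..})"
        by (auto simp: eventually_at_filter nn)
      have "(A \<longlongrightarrow> 0) (at 0 within {0..})"
        by (rule tendsto_sandwich[OF ev2 ev tendsto_const lim])
      thus ?thesis using True A0 by (simp add: continuous_within)
    qed
  qed
qed


lemma case_one:
  fixes A \<phi> :: "real \<Rightarrow> real"
  assumes young: "young_function A" and C2: "cond_C2 A" and C3: "cond_C3 1 A"
    and gauge: "gauge_function 1 \<phi>"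
  shows "\<forall>s t. 0 < s \<and> 0 < t \<longrightarrow>
           ennreal (funPsi 1 A \<phi> (s * t)) \<le> ennreal (\<phi> t) + ennreal (t ^ 1) * funB 1 A s"
proof (rule core[where Bf = A])
  have nn: "\<And>t. t \<ge> 0 \<Longrightarrow> A t \<ge> 0" and A0: "A 0 = 0" and cv: "convex_on {0..} A"
    using young_basic[OF young] by auto
  have Apos: "\<And>t. t > 0 \<Longrightarrow> A t > 0" using C2 unfolding cond_C2_def by auto
  have C3': "filterlim (\<lambda>t. t / A t) at_top (at_right 0)" using C3 unfolding cond_C3_def by simp
  show "1 \<le> (1::nat)" by simp
  show "gauge_function 1 \<phi>" by fact
  show "\<And>t. 0 \<le> t \<Longrightarrow> funB 1 A t = ennreal (A t)" unfolding funB_def by simp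
  show "\<And>t. 0 \<le> t \<Longrightarrow> 0 \<le> A t" by (rule nn)
  show "A 0 = 0" by fact
  show "continuous_on {0..} A" by (rule young_cont[OF young])
  show "\<And>x y. 0 < x \<Longrightarrow> x \<le> y \<Longrightarrow> A x * y ^ 1 \<le> x ^ 1 * A y"
    using young_le_lin[OF young] by auto
  show "\<exists>y>0. 0 < A y" using Apos[of 1] by (intro exI[of _ 1]) auto
  have "((\<lambda>t. inverse (t / A t)) \<longlongrightarrow> 0) (at_right 0)"
    by (rule tendsto_inverse_0_at_top[OF C3'])
  thus "((\<lambda>b. A b / b ^ 1) \<longlongrightarrow> 0) (at_right 0)" by simp
  show "A x * y ^ 1 < x ^ 1 * A y" if xy: "0 < x" "x < y" "0 < A y" for x y
  proof (rule ccontr)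
    assume "\<not> ?thesis"
    hence eq: "x * A y \<le> A x * y" by simp
    define c where "c = A y / y"
    have c: "c > 0" using xy unfolding c_def by auto
    have low: "c * t \<le> A t" if t: "0 < t" "t < x" for t
    proof -
      define \<mu> where "\<mu> = (x - t) / (y - t)"
      have mu: "0 \<le> \<mu>" "\<mu> \<le> 1" using t xy unfolding \<mu>_def by (auto simp: field_simps)
      have m: "\<mu> * (y - t) = x - t" using t xy unfolding \<mu>_def by simp
      have "(1 - \<mu>) * t + \<mu> * y = t + \<mu> * (y - t)" by (simp add: algebra_simps)
      hence pt: "(1 - \<mu>) *\<^sub>R t + \<mu> *\<^sub>R y = x" using m by simp
      have "A x \<le> (1 - \<mu>) * A t + \<mu> * A y"
        using convex_onD[OF cv, of \<mu> t y] mu t xy pt by auto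
      moreover have "A x \<ge> c * x" using eq xy unfolding c_def by (simp add: field_simps)
      moreover have "A y = c * y" using xy unfolding c_def by simp
      ultimately have "c * x \<le> (1 - \<mu>) * A t + \<mu> * (c * y)" by simp
      hence "c * x * (y - t) \<le> ((1 - \<mu>) * A t + \<mu> * (c * y)) * (y - t)"
        using t xy by (intro mult_right_mono) auto
      also have "\<dots> = ((y - t) - \<mu> * (y - t)) * A t + (\<mu> * (y - t)) * (c * y)"
        by (simp add: algebra_simps)
      also have "\<dots> = (y - x) * A t + (x - t) * (c * y)" unfolding m by simp
      finally have "c * x * (y - t) \<le> (y - x) * A t + (x - t) * (c * y)" .
      hence "(y - x) * (c * t) \<le> (y - x) * A t" by (simp add: algebra_simps)
      thus ?thesis using xy t by simp
    qed
    have "eventually (\<lambda>t. 1 / c < t / A t) (at_right 0)"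
      using C3' by (simp add: filterlim_at_top_dense)
    moreover have "eventually (\<lambda>t. t < x) (at_right 0)"
      using xy by (auto simp: eventually_at_right_field intro!: exI[of _ x])
    moreover have "eventually (\<lambda>t. 0 < t) (at_right (0::real))"
      by (simp add: eventually_at_right_field) (auto intro!: exI[of _ 1])
    ultimately have "eventually (\<lambda>t. False) (at_right (0::real))"
    proof eventually_elim
      case (elim t)
      have "c * t \<le> A t" using low elim by auto
      hence "t / A t \<le> 1 / c" using c elim Apos[of t] by (simp add: field_simps)
      thus False using elim by simp
    qed
    thus False by simp
  qed
qed


definition At :: "(real \<Rightarrow> real) \<Rightarrow> real \<Rightarrow> ennreal" where
  "At A s = young_conj (\<lambda>\<tau>. ennreal (A \<tau>)) s"

definition II :: "nat \<Rightarrow> (real \<Rightarrow> real) \<Rightarrow> real \<Rightarrow> ennreal" where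
  "II n A \<sigma> = (\<integral>\<^sup>+ s\<in>{\<sigma>..}. At A s * ennreal (s powr (-1 - conj_exp n)) \<partial>lborel)"

definition EE :: "nat \<Rightarrow> (real \<Rightarrow> real) \<Rightarrow> real \<Rightarrow> ennreal" where
  "EE n A \<sigma> = ennreal (\<sigma> powr conj_exp n) * II n A \<sigma>"

lemma funB_EE: "n \<noteq> 1 \<Longrightarrow> funB n A = young_conj (EE n A)"
  unfolding funB_def EE_def II_def At_def by simp

lemma ennreal_ge_all_top:
  fixes x :: ennreal
  assumes "\<And>r::real. ennreal r \<le> x"
  shows "x = top"
proof (cases x)
  case (real r)
  hence "ennreal (max 0 r + 1) \<le> ennreal r" using assms[of "max 0 r + 1"] by simp
  hence "max 0 r + 1 \<le> r" using real by (subst (asm) ennreal_le_iff) auto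
  thus ?thesis by simp
qed simp

lemma power_int_integral:
  fixes q a :: real
  assumes q: "q > 1" and a: "a > 0"
  shows "(\<integral>\<^sup>+ s. ennreal (s powr (-q)) * indicator {a..} s \<partial>lborel) = ennreal (a powr (1 - q) / (q - 1))"
proof -
  define F where "F = (\<lambda>x::real. - (x powr (1 - q) / (q - 1)))"
  have "(\<integral>\<^sup>+ s. ennreal (s powr (-q)) * indicator {a..} s \<partial>lborel) = ennreal (0 - F a)"
  proof (rule nn_integral_FTC_atLeast)
    show "(\<lambda>s. s powr (-q)) \<in> borel_measurable borel" by measurable
    show "(F has_real_derivative x powr (-q)) (at x)" if "a \<le> x" for x
    proof -
      have x: "x > 0" using that a by simp
      have "((\<lambda>x. x powr (1 - q)) has_real_derivative (1 - q) * x powr ((1 - q) - 1)) (at x)"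
        by (rule has_real_derivative_powr[OF x])
      hence "(F has_real_derivative - ((1 - q) * x powr ((1 - q) - 1) / (q - 1))) (at x)"
        unfolding F_def by (intro DERIV_minus DERIV_cdivide)
      moreover have "- ((1 - q) * x powr ((1 - q) - 1) / (q - 1)) = x powr (-q)"
      proof -
        have "q - 1 \<noteq> 0" using q by simp
        thus ?thesis by (simp add: field_simps)
      qed
      ultimately show ?thesis by simp
    qed
    show "0 \<le> x powr (-q)" for x by simp
    have "((\<lambda>x. x powr (1 - q)) \<longlongrightarrow> 0) at_top"
      using q by (intro tendsto_neg_powr filterlim_ident) auto
    hence "(F \<longlongrightarrow> - (0 / (q - 1))) at_top" unfolding F_def using q by (intro tendsto_intros) auto
    thus "(F \<longlongrightarrow> 0) at_top" by simp
  qed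
  thus ?thesis unfolding F_def by simp
qed

lemma conv_cont:
  fixes f :: "real \<Rightarrow> real"
  assumes c: "convex_on {0..} f" and f0: "f 0 = 0" and nn: "\<And>t. t \<ge> 0 \<Longrightarrow> f t \<ge> 0"
  shows "continuous_on {0..} f"
proof -
  have "convex_on {0<..} f" using c by (rule convex_on_subset) auto
  hence co: "continuous_on {0<..} f" by (intro convex_on_continuous) auto
  have lin: "f t \<le> t * f 1" if "0 \<le> t" "t \<le> 1" for t
  proof -
    have "f ((1 - t) *\<^sub>R 0 + t *\<^sub>R 1) \<le> (1 - t) * f 0 + t * f 1"
      using that by (intro convex_onD[OF c]) auto
    thus ?thesis using f0 by simp
  qed
  show ?thesis
    unfolding continuous_on_eq_continuous_within
  proof
    fix x :: real assume x: "x \<in> {0..}"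
    show "continuous (at x within {0..}) f"
    proof (cases "x = 0")
      case False
      hence "isCont f x" using co x by (subst (asm) continuous_on_eq_continuous_at) auto
      thus ?thesis by (rule continuous_at_imp_continuous_within)
    next
      case True
      have "((\<lambda>t. t * f 1) \<longlongrightarrow> 0 * f 1) (at 0 within {0..})"
        by (intro tendsto_intros)
      hence lim: "((\<lambda>t. t * f 1) \<longlongrightarrow> 0) (at 0 within {0..})" by simp
      have "eventually (\<lambda>t. t \<in> {-1<..<1}) (nhds (0::real))"
        by (rule eventually_nhds_in_open) auto
      hence ev: "eventually (\<lambda>t. f t \<le> t * f 1) (at 0 within {0..})"
        unfolding eventually_at_filter
        by eventually_elim (use lin in auto)
      have ev2: "eventually (\<lambda>t. 0 \<le> f t) (at 0 within {0..})"
        by (auto simp: eventually_at_filter nn)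
      have "(f \<longlongrightarrow> 0) (at 0 within {0..})"
        by (rule tendsto_sandwich[OF ev2 ev tendsto_const lim])
      thus ?thesis using True f0 by (simp add: continuous_within)
    qed
  qed
qed

context
  fixes n :: nat and A :: "real \<Rightarrow> real"
  assumes n2: "n \<ge> 2" and young: "young_function A" and C1: "cond_C1 n A"
    and C2: "cond_C2 A" and C3: "cond_C3 n A"
begin

abbreviation "p \<equiv> conj_exp n"

lemma p_facts: "p > 1" "p - 1 = 1 / (real n - 1)" "(real n - 1) * p = n" "real n - 1 > 0"
proof -
  have n: "real n \<ge> 2" using n2 by simp
  show "p > 1" "p - 1 = 1 / (real n - 1)" "(real n - 1) * p = n" "real n - 1 > 0"
    unfolding conj_exp_def using n by (auto simp: field_simps)
qed

lemma A_nn: "t \<ge> 0 \<Longrightarrow> A t \<ge> 0" and A0: "A 0 = 0" and A_cv: "convex_on {0..} A"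
  using young_basic[OF young] by auto

lemma A_pos: "t > 0 \<Longrightarrow> A t > 0" using C2 unfolding cond_C2_def by auto

lemma A_cont: "continuous_on {0..} A" by (rule young_cont[OF young])

definition "A' = (\<lambda>t. A (max 0 t))"

lemma A'_meas[measurable]: "A' \<in> borel_measurable borel"
proof -
  have "continuous_on UNIV (A \<circ> (\<lambda>t. max 0 t))"
    by (rule continuous_on_compose[OF _ continuous_on_subset[OF A_cont]])
       (auto intro!: continuous_intros)
  thus ?thesis unfolding A'_def by (intro borel_measurable_continuous_onI) (simp add: o_def)
qed

lemma A'_eq: "t \<ge> 0 \<Longrightarrow> A' t = A t" unfolding A'_def by simp

lemma At_ge: "\<tau> \<ge> 0 \<Longrightarrow> ennreal (s * \<tau> - A \<tau>) \<le> At A s"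
  unfolding At_def young_conj_def
  by (rule SUP_upper2[of \<tau>]) (auto simp: ennreal_minus A_nn mult.commute)

lemma At_nonpos: "s \<le> 0 \<Longrightarrow> At A s = 0"
  unfolding At_def young_conj_def
proof (intro antisym SUP_least)
  fix \<tau> :: real assume "s \<le> 0" "\<tau> \<in> {0..}"
  hence "\<tau> * s \<le> 0" by (simp add: mult_nonneg_nonpos)
  hence "ennreal (\<tau> * s) = 0" by (simp add: ennreal_eq_0_iff)
  thus "ennreal (\<tau> * s) - ennreal (A \<tau>) \<le> 0" by simp
qed simp

lemma At_mono: "s \<le> s' \<Longrightarrow> At A s \<le> At A s'"
  unfolding At_def young_conj_def
  by (auto intro!: SUP_mono bexI ennreal_minus_mono ennreal_leI mult_left_mono)

lemma S_closed: "closed {\<tau>. 0 \<le> \<tau> \<and> c * A \<tau> \<le> s * \<tau>}"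
proof -
  have "{\<tau>. 0 \<le> \<tau> \<and> c * A \<tau> \<le> s * \<tau>} = {0..} \<inter> (\<lambda>\<tau>. c * A \<tau> - s * \<tau>) -` {..0}" by auto
  also have "closed \<dots>"
    by (intro continuous_closed_preimage continuous_intros A_cont)
  finally show ?thesis .
qed

lemma S_sets: "{\<tau>. 0 \<le> \<tau> \<and> c * A \<tau> \<le> s * \<tau>} \<in> sets lborel"
  using S_closed by simp

lemma S_down: "0 \<le> \<tau>' \<Longrightarrow> \<tau>' \<le> \<tau> \<Longrightarrow> c \<ge> 0 \<Longrightarrow> 0 \<le> \<tau> \<and> c * A \<tau> \<le> s * \<tau> \<Longrightarrow> c * A \<tau>' \<le> s * \<tau>'"
proof -
  assume a: "0 \<le> \<tau>'" "\<tau>' \<le> \<tau>" "c \<ge> 0" "0 \<le> \<tau> \<and> c * A \<tau> \<le> s * \<tau>"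
  show ?thesis
  proof (cases "\<tau> = 0")
    case True thus ?thesis using a A0 by simp
  next
    case False
    hence t: "\<tau> > 0" using a by simp
    have yl: "A \<tau>' * \<tau> \<le> \<tau>' * A \<tau>" using young_le_lin[OF young a(1,2) t] .
    have "c * A \<tau>' * \<tau> \<le> \<tau>' * (c * A \<tau>)" using mult_left_mono[OF yl a(3)] by (simp add: algebra_simps)
    also have "\<dots> \<le> \<tau>' * (s * \<tau>)" using a by (intro mult_left_mono) auto
    finally have "(c * A \<tau>') * \<tau> \<le> (s * \<tau>') * \<tau>" by (simp add: algebra_simps)
    thus ?thesis using t by simp
  qed
qed

lemma At_le: assumes s: "s > 0"
  shows "At A s \<le> ennreal s * emeasure lborel {\<tau>. 0 \<le> \<tau> \<and> 1 * A \<tau> \<le> s * \<tau>}"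
  unfolding At_def young_conj_def
proof (rule SUP_least)
  fix \<tau> :: real assume t: "\<tau> \<in> {0..}"
  show "ennreal (\<tau> * s) - ennreal (A \<tau>) \<le> ennreal s * emeasure lborel {\<tau>. 0 \<le> \<tau> \<and> 1 * A \<tau> \<le> s * \<tau>}"
  proof (cases "A \<tau> \<le> s * \<tau>")
    case False
    have "ennreal (\<tau> * s) - ennreal (A \<tau>) = ennreal (\<tau> * s - A \<tau>)" using A_nn t by (simp add: ennreal_minus)
    also have "\<dots> = 0" using False by (simp add: ennreal_eq_0_iff mult.commute)
    finally show ?thesis by simp
  next
    case True
    have "{0..\<tau>} \<subseteq> {\<tau>. 0 \<le> \<tau> \<and> 1 * A \<tau> \<le> s * \<tau>}"
      using S_down[of _ \<tau> 1 s] True t by auto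
    hence "emeasure lborel {0..\<tau>} \<le> emeasure lborel {\<tau>. 0 \<le> \<tau> \<and> 1 * A \<tau> \<le> s * \<tau>}"
      by (intro emeasure_mono S_sets)
    hence "ennreal \<tau> \<le> emeasure lborel {\<tau>. 0 \<le> \<tau> \<and> 1 * A \<tau> \<le> s * \<tau>}" using t by simp
    hence "ennreal s * ennreal \<tau> \<le> ennreal s * emeasure lborel {\<tau>. 0 \<le> \<tau> \<and> 1 * A \<tau> \<le> s * \<tau>}"
      by (rule mult_left_mono) simp
    moreover have "ennreal (\<tau> * s) - ennreal (A \<tau>) \<le> ennreal s * ennreal \<tau>"
      using t s by (simp add: ennreal_minus A_nn ennreal_mult[symmetric] mult.commute ennreal_leI)
    ultimately show ?thesis by (rule order_trans[rotated])
  qed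
qed

lemma At_ge2: assumes s: "s > 0"
  shows "ennreal (s/2) * emeasure lborel {\<tau>. 0 \<le> \<tau> \<and> 2 * A \<tau> \<le> s * \<tau>} \<le> At A s"
proof -
  define S where "S = {\<tau>. 0 \<le> \<tau> \<and> 2 * A \<tau> \<le> s * \<tau>}"
  have mem: "ennreal (s/2 * \<tau>) \<le> At A s" if "\<tau> \<in> S" for \<tau>
  proof -
    have "s/2 * \<tau> \<le> s * \<tau> - A \<tau>" using that unfolding S_def by (auto simp: field_simps)
    hence "ennreal (s/2 * \<tau>) \<le> ennreal (s * \<tau> - A \<tau>)" by (rule ennreal_leI)
    also have "\<dots> \<le> At A s" using that unfolding S_def by (intro At_ge) auto
    finally show ?thesis .
  qed
  have "0 \<in> S" unfolding S_def using A0 by simp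
  show ?thesis
  proof (cases "bdd_above S")
    case True
    have SupS: "Sup S \<in> S" using closed_contains_Sup[of S] True \<open>0 \<in> S\<close> S_closed unfolding S_def
      by blast
    have eqS: "S = {0..Sup S}"
    proof
      show "S \<subseteq> {0..Sup S}" using cSup_upper[OF _ True] unfolding S_def by auto
      show "{0..Sup S} \<subseteq> S" using S_down[of _ "Sup S" 2 s] SupS unfolding S_def by auto
    qed
    have "Sup S \<ge> 0" using SupS unfolding S_def by simp
    have "emeasure lborel S = emeasure lborel {0..Sup S}" by (rule arg_cong[OF eqS])
    also have "\<dots> = ennreal (Sup S - 0)" by (rule emeasure_lborel_Icc) fact
    finally have "emeasure lborel S = ennreal (Sup S)" by simp
    hence "ennreal (s/2) * emeasure lborel S = ennreal (s/2 * Sup S)"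
      using s \<open>Sup S \<ge> 0\<close> by (simp add: ennreal_mult[symmetric])
    also have "\<dots> \<le> At A s" by (rule mem[OF SupS])
    finally show ?thesis unfolding S_def .
  next
    case False
    have "At A s = top"
    proof (rule ennreal_ge_all_top)
      fix r :: real
      obtain \<tau> where t: "\<tau> \<in> S" "\<tau> > 2 * max r 0 / s" using False unfolding bdd_above_def
        by (meson not_le)
      have "r \<le> s/2 * \<tau>" using t s by (simp add: field_simps)
      hence "ennreal r \<le> ennreal (s/2 * \<tau>)" by (rule ennreal_leI)
      thus "ennreal r \<le> At A s" using mem[OF t(1)] by simp
    qed
    thus ?thesis by simp
  qed
qed

lemma powr_flip: "x > 0 \<Longrightarrow> y > 0 \<Longrightarrow> (x / y) powr (- a) = (y / x) powr (a::real)"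
  by (simp add: powr_minus powr_divide)

lemma powr_neg_p: "s > 0 \<Longrightarrow> ennreal s * ennreal (s powr (-1 - p)) = ennreal (s powr (-p))"
proof -
  assume s: "s > 0"
  have "s powr (-p) = s powr (1 + (-1 - p))" by simp
  also have "\<dots> = s powr 1 * s powr (-1 - p)" by (rule powr_add)
  also have "\<dots> = s * s powr (-1 - p)" using s by simp
  finally have "s * s powr (-1 - p) = s powr (-p)" by simp
  thus ?thesis using s by (simp add: ennreal_mult[symmetric])
qed

lemma C1_int: "(\<integral>\<^sup>+ t. ennreal ((t / A' t) powr (1 / (real n - 1))) * indicator {1..} t \<partial>lborel) < \<infinity>"
proof -
  have "(\<integral>\<^sup>+ t. ennreal ((t / A' t) powr (1 / (real n - 1))) * indicator {1..} t \<partial>lborel)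
      = (\<integral>\<^sup>+ t\<in>{1..}. ennreal ((t / A t) powr (1 / (real n - 1))) \<partial>lborel)"
    by (intro nn_integral_cong) (auto simp: A'_eq split: split_indicator)
  also have "\<dots> < \<infinity>" using C1 n2 unfolding cond_C1_def by auto
  finally show ?thesis .
qed

lemma C3_int: "(\<integral>\<^sup>+ t. ennreal ((t / A' t) powr (1 / (real n - 1))) * indicator {0<..1} t \<partial>lborel) = \<infinity>"
proof -
  have "(\<integral>\<^sup>+ t. ennreal ((t / A' t) powr (1 / (real n - 1))) * indicator {0<..1} t \<partial>lborel)
      = (\<integral>\<^sup>+ t\<in>{0<..1}. ennreal ((t / A t) powr (1 / (real n - 1))) \<partial>lborel)"
    by (intro nn_integral_cong) (auto simp: A'_eq split: split_indicator)
  also have "\<dots> = \<infinity>" using C3 n2 unfolding cond_C3_def by auto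
  finally show ?thesis .
qed

lemma II_fin: assumes \<sigma>: "\<sigma> > 0" shows "II n A \<sigma> < \<infinity>"
proof -
  define G where "G = (\<lambda>\<tau> s. if 0 \<le> \<tau> \<and> A' \<tau> \<le> s * \<tau> \<and> \<sigma> \<le> s then ennreal (s powr (-p)) else 0)"
  have Gm: "case_prod G \<in> borel_measurable (lborel \<Otimes>\<^sub>M lborel)"
    unfolding G_def by measurable
  have "II n A \<sigma> \<le> (\<integral>\<^sup>+ s. emeasure lborel {\<tau>. 0 \<le> \<tau> \<and> 1 * A \<tau> \<le> s * \<tau>} * (ennreal (s powr (-p)) * indicator {\<sigma>..} s) \<partial>lborel)"
    unfolding II_def
  proof (intro nn_integral_mono)
    fix s :: real
    show "At A s * ennreal (s powr (-1 - p)) * indicator {\<sigma>..} s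
        \<le> emeasure lborel {\<tau>. 0 \<le> \<tau> \<and> 1 * A \<tau> \<le> s * \<tau>} * (ennreal (s powr (-p)) * indicator {\<sigma>..} s)"
    proof (cases "\<sigma> \<le> s")
      case True
      hence s: "s > 0" using \<sigma> by simp
      have "At A s * ennreal (s powr (-1 - p)) \<le> ennreal s * emeasure lborel {\<tau>. 0 \<le> \<tau> \<and> 1 * A \<tau> \<le> s * \<tau>} * ennreal (s powr (-1 - p))"
        by (intro mult_right_mono At_le[OF s]) auto
      also have "\<dots> = emeasure lborel {\<tau>. 0 \<le> \<tau> \<and> 1 * A \<tau> \<le> s * \<tau>} * (ennreal s * ennreal (s powr (-1 - p)))"
        by (simp add: ac_simps)
      also have "\<dots> = emeasure lborel {\<tau>. 0 \<le> \<tau> \<and> 1 * A \<tau> \<le> s * \<tau>} * ennreal (s powr (-p))"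
        using powr_neg_p[OF s] by simp
      finally show ?thesis using True by simp
    qed simp
  qed
  also have "\<dots> = (\<integral>\<^sup>+ s. \<integral>\<^sup>+ \<tau>. G \<tau> s \<partial>lborel \<partial>lborel)"
  proof (intro nn_integral_cong)
    fix s :: real
    have "emeasure lborel {\<tau>. 0 \<le> \<tau> \<and> 1 * A \<tau> \<le> s * \<tau>} * (ennreal (s powr (-p)) * indicator {\<sigma>..} s)
        = (\<integral>\<^sup>+ \<tau>. indicator {\<tau>. 0 \<le> \<tau> \<and> 1 * A \<tau> \<le> s * \<tau>} \<tau> \<partial>lborel) * (ennreal (s powr (-p)) * indicator {\<sigma>..} s)"
      by (subst nn_integral_indicator[OF S_sets]) (rule refl)
    also have "\<dots> = (\<integral>\<^sup>+ \<tau>. indicator {\<tau>. 0 \<le> \<tau> \<and> 1 * A \<tau> \<le> s * \<tau>} \<tau> * (ennreal (s powr (-p)) * indicator {\<sigma>..} s) \<partial>lborel)"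
      by (rule nn_integral_multc[symmetric]) (rule borel_measurable_indicator[OF S_sets])
    also have "\<dots> = (\<integral>\<^sup>+ \<tau>. G \<tau> s \<partial>lborel)"
      by (intro nn_integral_cong) (auto simp: G_def A'_eq split: split_indicator)
    finally show "emeasure lborel {\<tau>. 0 \<le> \<tau> \<and> 1 * A \<tau> \<le> s * \<tau>} * (ennreal (s powr (-p)) * indicator {\<sigma>..} s)
        = (\<integral>\<^sup>+ \<tau>. G \<tau> s \<partial>lborel)" .
  qed
  also have "\<dots> = (\<integral>\<^sup>+ \<tau>. \<integral>\<^sup>+ s. G \<tau> s \<partial>lborel \<partial>lborel)"
    by (rule lborel_pair.Fubini'[OF Gm])
  also have "\<dots> \<le> (\<integral>\<^sup>+ (\<tau>::real). ennreal (\<sigma> powr (1 - p) / (p - 1)) * indicator {0..1} \<tau>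
      + ennreal ((\<tau> / A' \<tau>) powr (1 / (real n - 1)) / (p - 1)) * indicator {1..} \<tau> \<partial>lborel)"
  proof (intro nn_integral_mono)
    fix \<tau> :: real
    show "(\<integral>\<^sup>+ s. G \<tau> s \<partial>lborel) \<le> ennreal (\<sigma> powr (1 - p) / (p - 1)) * indicator {0..1} \<tau>
      + ennreal ((\<tau> / A' \<tau>) powr (1 / (real n - 1)) / (p - 1)) * indicator {1..} \<tau>"
    proof (cases "\<tau> < 0")
      case True thus ?thesis by (simp add: G_def)
    next
      case False
      show ?thesis
      proof (cases "\<tau> \<le> 1")
        case True
        have "(\<integral>\<^sup>+ s. G \<tau> s \<partial>lborel) \<le> (\<integral>\<^sup>+ s. ennreal (s powr (-p)) * indicator {\<sigma>..} s \<partial>lborel)"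
          by (intro nn_integral_mono) (auto simp: G_def)
        also have "\<dots> = ennreal (\<sigma> powr (1 - p) / (p - 1))"
          by (rule power_int_integral[OF p_facts(1) \<sigma>])
        finally show ?thesis using True False by (simp add: add_increasing2)
      next
        case gt: False
        have t: "\<tau> > 0" "A' \<tau> > 0" using gt A_pos[of \<tau>] A'_eq[of \<tau>] by auto
        have "(\<integral>\<^sup>+ s. G \<tau> s \<partial>lborel) \<le> (\<integral>\<^sup>+ s. ennreal (s powr (-p)) * indicator {A' \<tau> / \<tau>..} s \<partial>lborel)"
          using t by (intro nn_integral_mono) (auto simp: G_def field_simps)
        also have "\<dots> = ennreal ((A' \<tau> / \<tau>) powr (1 - p) / (p - 1))"
          using t by (intro power_int_integral[OF p_facts(1)]) auto
        also have "(A' \<tau> / \<tau>) powr (1 - p) = (\<tau> / A' \<tau>) powr (1 / (real n - 1))"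
        proof -
          have "1 - p = - (1 / (real n - 1))" using p_facts(2) by simp
          thus ?thesis using t by (simp add: powr_flip)
        qed
        finally show ?thesis using gt by simp
      qed
    qed
  qed
  also have "\<dots> = (\<integral>\<^sup>+ (\<tau>::real). ennreal (\<sigma> powr (1 - p) / (p - 1)) * indicator {0..1} \<tau> \<partial>lborel)
      + (\<integral>\<^sup>+ \<tau>. ennreal ((\<tau> / A' \<tau>) powr (1 / (real n - 1)) / (p - 1)) * indicator {1..} \<tau> \<partial>lborel)"
  proof -
    have m1: "(\<lambda>\<tau>::real. ennreal (\<sigma> powr (1 - p) / (p - 1)) * indicator {0..1} \<tau>) \<in> borel_measurable lborel"
      by measurable
    have m2: "(\<lambda>\<tau>. ennreal ((\<tau> / A' \<tau>) powr (1 / (real n - 1)) / (p - 1)) * indicator {1..} \<tau>) \<in> borel_measurable lborel"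
      by measurable
    show ?thesis by (rule nn_integral_add[OF m1 m2])
  qed
  finally have le: "II n A \<sigma> \<le> (\<integral>\<^sup>+ (\<tau>::real). ennreal (\<sigma> powr (1 - p) / (p - 1)) * indicator {0..1} \<tau> \<partial>lborel)
      + (\<integral>\<^sup>+ \<tau>. ennreal ((\<tau> / A' \<tau>) powr (1 / (real n - 1)) / (p - 1)) * indicator {1..} \<tau> \<partial>lborel)" .
  have e2: "(\<integral>\<^sup>+ \<tau>. ennreal ((\<tau> / A' \<tau>) powr (1 / (real n - 1)) / (p - 1)) * indicator {1..} \<tau> \<partial>lborel)
      = (\<integral>\<^sup>+ \<tau>. ennreal (1 / (p - 1)) * (ennreal ((\<tau> / A' \<tau>) powr (1 / (real n - 1))) * indicator {1..} \<tau>) \<partial>lborel)"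
  proof (intro nn_integral_cong)
    fix \<tau> :: real
    have "ennreal ((\<tau> / A' \<tau>) powr (1 / (real n - 1)) / (p - 1))
        = ennreal (1 / (p - 1)) * ennreal ((\<tau> / A' \<tau>) powr (1 / (real n - 1)))"
      using p_facts(1) by (subst ennreal_mult[symmetric]) auto
    thus "ennreal ((\<tau> / A' \<tau>) powr (1 / (real n - 1)) / (p - 1)) * indicator {1..} \<tau>
        = ennreal (1 / (p - 1)) * (ennreal ((\<tau> / A' \<tau>) powr (1 / (real n - 1))) * indicator {1..} \<tau>)"
      by (simp add: mult.assoc)
  qed
  have e3: "\<dots> = ennreal (1 / (p - 1)) * (\<integral>\<^sup>+ \<tau>. ennreal ((\<tau> / A' \<tau>) powr (1 / (real n - 1))) * indicator {1..} \<tau> \<partial>lborel)"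
    by (rule nn_integral_cmult) measurable
  have f2: "(\<integral>\<^sup>+ \<tau>. ennreal ((\<tau> / A' \<tau>) powr (1 / (real n - 1)) / (p - 1)) * indicator {1..} \<tau> \<partial>lborel) < \<infinity>"
    unfolding e2 e3 using C1_int by (simp add: ennreal_mult_less_top)
  have e1: "(\<integral>\<^sup>+ (\<tau>::real). ennreal (\<sigma> powr (1 - p) / (p - 1)) * indicator {0..1} \<tau> \<partial>lborel)
     = ennreal (\<sigma> powr (1 - p) / (p - 1)) * emeasure lborel {0..1::real}"
    by (rule nn_integral_cmult_indicator) simp
  have f1: "(\<integral>\<^sup>+ (\<tau>::real). ennreal (\<sigma> powr (1 - p) / (p - 1)) * indicator {0..1} \<tau> \<partial>lborel) < \<infinity>"
    unfolding e1 by (simp add: ennreal_mult_less_top)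
  show ?thesis using le f1 f2 by (simp add: order_le_less_trans)
qed

lemma II_anti: "\<sigma> \<le> \<sigma>' \<Longrightarrow> II n A \<sigma>' \<le> II n A \<sigma>"
  unfolding II_def by (intro nn_integral_mono) (auto split: split_indicator)

lemma At_scale: assumes "0 < \<sigma>" "\<sigma> \<le> s" shows "ennreal (s / \<sigma>) * At A \<sigma> \<le> At A s"
  unfolding At_def young_conj_def SUP_mult_left_ennreal
proof (rule SUP_least)
  fix \<tau> :: real assume t: "\<tau> \<in> {0..}"
  have "ennreal (s / \<sigma>) * (ennreal (\<tau> * \<sigma>) - ennreal (A \<tau>)) \<le> ennreal (\<tau> * s) - ennreal (A \<tau>)"
  proof (cases "A \<tau> \<le> \<tau> * \<sigma>")
    case True
    have r: "s / \<sigma> * (\<tau> * \<sigma> - A \<tau>) \<le> \<tau> * s - A \<tau>"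
    proof -
      have "s / \<sigma> \<ge> 1" using assms by simp
      hence "1 * A \<tau> \<le> s / \<sigma> * A \<tau>" using A_nn[of \<tau>] t by (intro mult_right_mono) auto
      moreover have "s / \<sigma> * (\<tau> * \<sigma>) = \<tau> * s" using assms by simp
      ultimately show ?thesis by (simp add: right_diff_distrib)
    qed
    have "ennreal (s / \<sigma>) * (ennreal (\<tau> * \<sigma>) - ennreal (A \<tau>)) = ennreal (s / \<sigma> * (\<tau> * \<sigma> - A \<tau>))"
      using True A_nn[of \<tau>] t assms by (simp add: ennreal_minus ennreal_mult[symmetric])
    also have "\<dots> \<le> ennreal (\<tau> * s - A \<tau>)" using r by (rule ennreal_leI)
    also have "\<dots> = ennreal (\<tau> * s) - ennreal (A \<tau>)" using A_nn[of \<tau>] t by (simp add: ennreal_minus)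
    finally show ?thesis .
  next
    case False
    have "ennreal (\<tau> * \<sigma>) - ennreal (A \<tau>) = ennreal (\<tau> * \<sigma> - A \<tau>)" using A_nn[of \<tau>] t by (simp add: ennreal_minus)
    also have "\<dots> = 0" using False by (simp add: ennreal_eq_0_iff)
    finally show ?thesis by simp
  qed
  also have "\<dots> \<le> (SUP \<tau>\<in>{0..}. ennreal (\<tau> * s) - ennreal (A \<tau>))"
    using t by (rule SUP_upper)
  finally show "ennreal (s / \<sigma>) * (ennreal (\<tau> * \<sigma>) - ennreal (A \<tau>)) \<le> (SUP \<tau>\<in>{0..}. ennreal (\<tau> * s) - ennreal (A \<tau>))" .
qed

lemma EE_lower: assumes \<sigma>: "\<sigma> > 0" shows "ennreal (real n - 1) * At A \<sigma> \<le> EE n A \<sigma>"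
proof -
  have "(\<integral>\<^sup>+ s. (ennreal (1 / \<sigma>) * At A \<sigma>) * (ennreal (s powr (-p)) * indicator {\<sigma>..} s) \<partial>lborel) \<le> II n A \<sigma>"
    unfolding II_def
  proof (intro nn_integral_mono)
    fix s :: real
    show "(ennreal (1 / \<sigma>) * At A \<sigma>) * (ennreal (s powr (-p)) * indicator {\<sigma>..} s) \<le> At A s * ennreal (s powr (-1 - p)) * indicator {\<sigma>..} s"
    proof (cases "\<sigma> \<le> s")
      case True
      hence s: "s > 0" using \<sigma> by simp
      have "(ennreal (1 / \<sigma>) * At A \<sigma>) * ennreal (s powr (-p)) = (ennreal (1 / \<sigma>) * At A \<sigma>) * (ennreal s * ennreal (s powr (-1 - p)))"
        using powr_neg_p[OF s] by simp
      also have "\<dots> = (ennreal (s / \<sigma>) * At A \<sigma>) * ennreal (s powr (-1 - p))"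
        using \<sigma> s by (simp add: ennreal_mult[symmetric] ac_simps)
      also have "\<dots> \<le> At A s * ennreal (s powr (-1 - p))"
        using At_scale[OF \<sigma> True] by (rule mult_right_mono) simp
      finally show ?thesis using True by simp
    qed simp
  qed
  moreover have "(\<integral>\<^sup>+ s. (ennreal (1 / \<sigma>) * At A \<sigma>) * (ennreal (s powr (-p)) * indicator {\<sigma>..} s) \<partial>lborel)
      = (ennreal (1 / \<sigma>) * At A \<sigma>) * ennreal (\<sigma> powr (1 - p) / (p - 1))"
    by (subst nn_integral_cmult) (simp_all add: power_int_integral[OF p_facts(1) \<sigma>])
  ultimately have le: "(ennreal (1 / \<sigma>) * At A \<sigma>) * ennreal (\<sigma> powr (1 - p) / (p - 1)) \<le> II n A \<sigma>" by simp
  have "ennreal (real n - 1) * At A \<sigma> = ennreal (\<sigma> powr p) * ((ennreal (1 / \<sigma>) * At A \<sigma>) * ennreal (\<sigma> powr (1 - p) / (p - 1)))"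
  proof -
    have "\<sigma> powr p * (1 / \<sigma>) * (\<sigma> powr (1 - p) / (p - 1)) = (\<sigma> powr p * \<sigma> powr (1 - p)) / \<sigma> / (p - 1)"
      by simp
    also have "\<sigma> powr p * \<sigma> powr (1 - p) = \<sigma>" using \<sigma> by (simp add: powr_add[symmetric])
    finally have "\<sigma> powr p * (1 / \<sigma>) * (\<sigma> powr (1 - p) / (p - 1)) = real n - 1"
      using \<sigma> p_facts(2,4) by simp
    hence "ennreal (real n - 1) = ennreal (\<sigma> powr p) * ennreal (1 / \<sigma>) * ennreal (\<sigma> powr (1 - p) / (p - 1))"
      using \<sigma> p_facts(1) by (simp add: ennreal_mult[symmetric])
    thus ?thesis by (simp add: ac_simps)
  qed
  also have "\<dots> \<le> ennreal (\<sigma> powr p) * II n A \<sigma>" using le by (rule mult_left_mono) simp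
  finally show ?thesis unfolding EE_def .
qed

lemma EE_fin: "\<sigma> > 0 \<Longrightarrow> EE n A \<sigma> < \<infinity>"
  unfolding EE_def using II_fin by (simp add: ennreal_mult_less_top)

lemma At_fin: "At A s < \<infinity>"
proof (cases "s > 0")
  case True
  have "ennreal (real n - 1) * At A s < \<infinity>" using EE_lower[OF True] EE_fin[OF True] by simp
  thus ?thesis using p_facts(4) by (auto simp: ennreal_mult_less_top)
qed (simp add: At_nonpos)

definition "atr = (\<lambda>s. enn2real (At A s))"

lemma At_at: "At A s = ennreal (atr s)" unfolding atr_def using At_fin by simp

lemma at_mono: "mono atr"
  unfolding mono_def atr_def using At_mono At_fin by (auto intro!: enn2real_mono)

lemma at_meas[measurable]: "atr \<in> borel_measurable borel"
  by (rule borel_measurable_mono[OF at_mono])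

lemma At_pos: assumes s: "s > 0" shows "At A s > 0"
proof (rule ccontr)
  assume "\<not> At A s > 0"
  hence z: "At A s = 0" by simp
  have ge: "s * \<tau> \<le> A \<tau>" if "\<tau> \<ge> 0" for \<tau>
  proof -
    have "ennreal (s * \<tau> - A \<tau>) \<le> 0" using At_ge[OF that, of s] z by simp
    thus ?thesis by (simp add: ennreal_eq_0_iff)
  qed
  have "(\<integral>\<^sup>+ t. ennreal ((t / A' t) powr (1 / (real n - 1))) * indicator {0<..1} t \<partial>lborel)
      \<le> (\<integral>\<^sup>+ (t::real). ennreal ((1 / s) powr (1 / (real n - 1))) * indicator {0<..1} t \<partial>lborel)"
  proof (intro nn_integral_mono)
    fix t :: real
    show "ennreal ((t / A' t) powr (1 / (real n - 1))) * indicator {0<..1} t \<le> ennreal ((1 / s) powr (1 / (real n - 1))) * indicator {0<..1} t"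
    proof (cases "t \<in> {0<..1}")
      case True
      hence t: "t > 0" "A' t > 0" using A_pos[of t] A'_eq[of t] by auto
      have "t / A' t \<le> 1 / s" using ge[of t] t s A'_eq[of t] by (simp add: field_simps)
      hence "(t / A' t) powr (1 / (real n - 1)) \<le> (1 / s) powr (1 / (real n - 1))"
        using t p_facts(4) by (intro powr_mono2) auto
      thus ?thesis using True by (simp add: ennreal_leI)
    qed simp
  qed
  also have "\<dots> = ennreal ((1 / s) powr (1 / (real n - 1))) * emeasure lborel {0<..1::real}"
    by (rule nn_integral_cmult_indicator) simp
  also have "\<dots> < \<infinity>" by (simp add: ennreal_mult_less_top)
  finally show False using C3_int by simp
qed

lemma II_big: "\<exists>\<sigma>>0. ennreal M \<le> II n A \<sigma>"
proof -
  define G where "G = (\<lambda>(k::nat) \<tau> s. if 0 \<le> \<tau> \<and> 2 * A' \<tau> \<le> s * \<tau> \<and> 1 / Suc k \<le> s then ennreal (1/2) * ennreal (s powr (-p)) else 0)"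
  have Gm[measurable]: "case_prod (G k) \<in> borel_measurable (lborel \<Otimes>\<^sub>M lborel)" for k
    unfolding G_def by measurable
  define H where "H = (\<lambda>k \<tau>. \<integral>\<^sup>+ s. G k \<tau> s \<partial>lborel)"
  have Hm: "H k \<in> borel_measurable lborel" for k
    unfolding H_def by (rule lborel.borel_measurable_nn_integral[OF Gm])
  have a: "(\<integral>\<^sup>+ \<tau>. H k \<tau> \<partial>lborel) \<le> II n A (1 / Suc k)" for k
  proof -
    define \<sigma> where "\<sigma> = 1 / real (Suc k)"
    have \<sigma>: "\<sigma> > 0" unfolding \<sigma>_def by simp
    have "(\<integral>\<^sup>+ s. emeasure lborel {\<tau>. 0 \<le> \<tau> \<and> 2 * A \<tau> \<le> s * \<tau>} * (ennreal (1/2) * ennreal (s powr (-p)) * indicator {\<sigma>..} s) \<partial>lborel) \<le> II n A \<sigma>"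
      unfolding II_def
    proof (intro nn_integral_mono)
      fix s :: real
      show "emeasure lborel {\<tau>. 0 \<le> \<tau> \<and> 2 * A \<tau> \<le> s * \<tau>} * (ennreal (1/2) * ennreal (s powr (-p)) * indicator {\<sigma>..} s)
          \<le> At A s * ennreal (s powr (-1 - p)) * indicator {\<sigma>..} s"
      proof (cases "\<sigma> \<le> s")
        case True
        hence s: "s > 0" using \<sigma> by simp
        have "ennreal (1/2) * ennreal (s powr (-p)) = ennreal (1/2) * (ennreal s * ennreal (s powr (-1 - p)))"
          using powr_neg_p[OF s] by simp
        also have "\<dots> = ennreal (s / 2) * ennreal (s powr (-1 - p))"
        proof -
          have "ennreal (s/2) = ennreal (1/2) * ennreal s" using s by (subst ennreal_mult[symmetric]) auto
          thus ?thesis by (simp only: mult.assoc)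
        qed
        finally have eq: "ennreal (1/2) * ennreal (s powr (-p)) = ennreal (s / 2) * ennreal (s powr (-1 - p))" .
        have "emeasure lborel {\<tau>. 0 \<le> \<tau> \<and> 2 * A \<tau> \<le> s * \<tau>} * (ennreal (1/2) * ennreal (s powr (-p)))
            = (ennreal (s / 2) * emeasure lborel {\<tau>. 0 \<le> \<tau> \<and> 2 * A \<tau> \<le> s * \<tau>}) * ennreal (s powr (-1 - p))"
          unfolding eq by (simp add: ac_simps)
        also have "\<dots> \<le> At A s * ennreal (s powr (-1 - p))"
          by (rule mult_right_mono[OF At_ge2[OF s]]) simp
        finally show ?thesis using True by simp
      qed simp
    qed
    moreover have "(\<integral>\<^sup>+ s. emeasure lborel {\<tau>. 0 \<le> \<tau> \<and> 2 * A \<tau> \<le> s * \<tau>} * (ennreal (1/2) * ennreal (s powr (-p)) * indicator {\<sigma>..} s) \<partial>lborel)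
        = (\<integral>\<^sup>+ s. \<integral>\<^sup>+ \<tau>. G k \<tau> s \<partial>lborel \<partial>lborel)"
    proof (intro nn_integral_cong)
      fix s :: real
      have "emeasure lborel {\<tau>. 0 \<le> \<tau> \<and> 2 * A \<tau> \<le> s * \<tau>} * (ennreal (1/2) * ennreal (s powr (-p)) * indicator {\<sigma>..} s)
          = (\<integral>\<^sup>+ \<tau>. indicator {\<tau>. 0 \<le> \<tau> \<and> 2 * A \<tau> \<le> s * \<tau>} \<tau> \<partial>lborel) * (ennreal (1/2) * ennreal (s powr (-p)) * indicator {\<sigma>..} s)"
        by (subst nn_integral_indicator[OF S_sets]) (rule refl)
      also have "\<dots> = (\<integral>\<^sup>+ \<tau>. indicator {\<tau>. 0 \<le> \<tau> \<and> 2 * A \<tau> \<le> s * \<tau>} \<tau> * (ennreal (1/2) * ennreal (s powr (-p)) * indicator {\<sigma>..} s) \<partial>lborel)"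
        by (rule nn_integral_multc[symmetric]) (rule borel_measurable_indicator[OF S_sets])
      also have "\<dots> = (\<integral>\<^sup>+ \<tau>. G k \<tau> s \<partial>lborel)"
        by (intro nn_integral_cong) (auto simp: G_def A'_eq \<sigma>_def split: split_indicator)
      finally show "emeasure lborel {\<tau>. 0 \<le> \<tau> \<and> 2 * A \<tau> \<le> s * \<tau>} * (ennreal (1/2) * ennreal (s powr (-p)) * indicator {\<sigma>..} s)
          = (\<integral>\<^sup>+ \<tau>. G k \<tau> s \<partial>lborel)" .
    qed
    moreover have "(\<integral>\<^sup>+ s. \<integral>\<^sup>+ \<tau>. G k \<tau> s \<partial>lborel \<partial>lborel) = (\<integral>\<^sup>+ \<tau>. H k \<tau> \<partial>lborel)"
      unfolding H_def by (rule lborel_pair.Fubini'[OF Gm])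
    ultimately show ?thesis unfolding \<sigma>_def by simp
  qed
  have inc: "incseq H"
  proof (rule incseq_SucI)
    fix k
    show "H k \<le> H (Suc k)" unfolding H_def le_fun_def
    proof
      fix \<tau>
      have "1 / real (Suc (Suc k)) \<le> 1 / real (Suc k)" by (simp add: frac_le)
      thus "(\<integral>\<^sup>+ s. G k \<tau> s \<partial>lborel) \<le> (\<integral>\<^sup>+ s. G (Suc k) \<tau> s \<partial>lborel)"
        by (intro nn_integral_mono) (auto simp: G_def)
    qed
  qed
  define c where "c = 1/2 * (2 powr (1 - p) / (p - 1))"
  have c: "c > 0" unfolding c_def using p_facts(1) by simp
  have d: "ennreal c * (ennreal ((\<tau> / A' \<tau>) powr (1 / (real n - 1))) * indicator {0<..1} \<tau>) \<le> (SUP k. H k \<tau>)" for \<tau>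
  proof (cases "\<tau> \<in> {0<..1}")
    case True
    hence t: "\<tau> > 0" "A' \<tau> > 0" using A_pos[of \<tau>] A'_eq[of \<tau>] by auto
    define h where "h = 2 * A' \<tau> / \<tau>"
    have h: "h > 0" unfolding h_def using t by simp
    obtain k :: nat where k: "1 / h < real (Suc k)"
      using reals_Archimedean2[of "1/h"] by (metis less_Suc_eq of_nat_Suc of_nat_less_iff order_less_trans)
    have kh: "1 / real (Suc k) \<le> h" using k h by (simp add: field_simps)
    have "H k \<tau> \<ge> (\<integral>\<^sup>+ s. ennreal (1/2) * (ennreal (s powr (-p)) * indicator {h..} s) \<partial>lborel)"
      unfolding H_def
    proof (intro nn_integral_mono)
      fix s :: real
      show "ennreal (1/2) * (ennreal (s powr (-p)) * indicator {h..} s) \<le> G k \<tau> s"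
      proof (cases "h \<le> s")
        case True
        have "2 * A' \<tau> \<le> s * \<tau>" using True t unfolding h_def by (simp add: field_simps)
        moreover have "1 / real (Suc k) \<le> s" using kh True by simp
        ultimately show ?thesis using t True by (simp add: G_def)
      qed simp
    qed
    also have "(\<integral>\<^sup>+ s. ennreal (1/2) * (ennreal (s powr (-p)) * indicator {h..} s) \<partial>lborel)
        = ennreal (1/2) * ennreal (h powr (1 - p) / (p - 1))"
      by (subst nn_integral_cmult) (simp_all add: power_int_integral[OF p_facts(1) h])
    also have "ennreal (1/2) * ennreal (h powr (1 - p) / (p - 1)) = ennreal c * ennreal ((\<tau> / A' \<tau>) powr (1 / (real n - 1)))"
    proof -
      have "h powr (1 - p) = 2 powr (1 - p) * (A' \<tau> / \<tau>) powr (1 - p)"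
        unfolding h_def using t by (simp add: powr_mult[symmetric])
      also have "(A' \<tau> / \<tau>) powr (1 - p) = (\<tau> / A' \<tau>) powr (1 / (real n - 1))"
      proof -
        have "1 - p = - (1 / (real n - 1))" using p_facts(2) by simp
        thus ?thesis using t by (simp add: powr_flip)
      qed
      finally have "1/2 * (h powr (1 - p) / (p - 1)) = c * (\<tau> / A' \<tau>) powr (1 / (real n - 1))"
        unfolding c_def by simp
      hence "ennreal (1/2 * (h powr (1 - p) / (p - 1))) = ennreal (c * (\<tau> / A' \<tau>) powr (1 / (real n - 1)))"
        by simp
      moreover have "ennreal (1/2 * (h powr (1 - p) / (p - 1))) = ennreal (1/2) * ennreal (h powr (1 - p) / (p - 1))"
        using p_facts(1) by (intro ennreal_mult) auto
      moreover have "ennreal (c * (\<tau> / A' \<tau>) powr (1 / (real n - 1))) = ennreal c * ennreal ((\<tau> / A' \<tau>) powr (1 / (real n - 1)))"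
        using c by (intro ennreal_mult) auto
      ultimately show ?thesis by simp
    qed
    finally have "ennreal c * ennreal ((\<tau> / A' \<tau>) powr (1 / (real n - 1))) \<le> H k \<tau>" .
    also have "\<dots> \<le> (SUP k. H k \<tau>)" by (rule SUP_upper) simp
    finally show ?thesis using True by simp
  qed simp
  have "\<infinity> = ennreal c * (\<integral>\<^sup>+ \<tau>. ennreal ((\<tau> / A' \<tau>) powr (1 / (real n - 1))) * indicator {0<..1} \<tau> \<partial>lborel)"
    using C3_int c by (simp add: ennreal_mult_top)
  also have "\<dots> = (\<integral>\<^sup>+ \<tau>. ennreal c * (ennreal ((\<tau> / A' \<tau>) powr (1 / (real n - 1))) * indicator {0<..1} \<tau>) \<partial>lborel)"
    by (rule nn_integral_cmult[symmetric]) measurable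
  also have "\<dots> \<le> (\<integral>\<^sup>+ \<tau>. (SUP k. H k \<tau>) \<partial>lborel)"
    by (intro nn_integral_mono d)
  also have "\<dots> = (SUP k. \<integral>\<^sup>+ \<tau>. H k \<tau> \<partial>lborel)"
    by (rule nn_integral_monotone_convergence_SUP[OF inc Hm])
  also have "\<dots> \<le> (SUP k. II n A (1 / Suc k))"
    by (intro SUP_mono) (use a in blast)
  finally have top: "(SUP k. II n A (1 / Suc k)) = \<infinity>" by (simp add: top_unique)
  have "ennreal M < \<infinity>" by simp
  hence "ennreal M < (SUP k. II n A (1 / Suc k))" unfolding top[symmetric] .
  then obtain k where "ennreal M < II n A (1 / Suc k)" by (auto simp: less_SUP_iff)
  thus ?thesis by (intro exI[of _ "1 / Suc k"]) auto
qed

lemma EE0: "EE n A 0 = 0"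
  unfolding EE_def using p_facts(1) by simp

definition "ee = (\<lambda>\<sigma>. enn2real (EE n A \<sigma>))"

lemma EE_ee: "\<sigma> \<ge> 0 \<Longrightarrow> EE n A \<sigma> = ennreal (ee \<sigma>)"
proof -
  assume "\<sigma> \<ge> 0"
  show ?thesis
  proof (cases "\<sigma> = 0")
    case True thus ?thesis unfolding ee_def by (simp add: EE0)
  next
    case False
    hence "EE n A \<sigma> < \<infinity>" using EE_fin \<open>\<sigma> \<ge> 0\<close> by simp
    thus ?thesis unfolding ee_def by simp
  qed
qed

lemma ee_nn: "ee \<sigma> \<ge> 0" unfolding ee_def by simp

lemma ee0: "ee 0 = 0" unfolding ee_def by (simp add: EE0)

lemma B_eq: "funB n A t = (SUP \<sigma>\<in>{0..}. ennreal (\<sigma> * t - ee \<sigma>))"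
proof -
  have "n \<noteq> 1" using n2 by simp
  hence "funB n A t = young_conj (EE n A) t" by (simp only: funB_EE[OF \<open>n \<noteq> 1\<close>])
  also have "\<dots> = (SUP \<sigma>\<in>{0..}. ennreal (\<sigma> * t) - EE n A \<sigma>)"
    unfolding young_conj_def by (rule refl)
  also have "\<dots> = (SUP \<sigma>\<in>{0..}. ennreal (\<sigma> * t - ee \<sigma>))"
    by (intro SUP_cong refl) (simp add: EE_ee ennreal_minus ee_nn)
  finally show ?thesis .
qed

lemma ennreal_mult_le: assumes c: "c \<ge> 0" shows "ennreal (c * x) \<le> ennreal c * ennreal x"
proof (cases "x \<ge> 0")
  case True thus ?thesis using c by (simp add: ennreal_mult)
next
  case False
  hence "c * x \<le> 0" using c by (simp add: mult_nonneg_nonpos)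
  hence "ennreal (c * x) = 0" by (simp add: ennreal_eq_0_iff)
  thus ?thesis by simp
qed

lemma ee_lower: assumes "\<sigma> \<ge> 0" "\<tau> \<ge> 0" shows "(real n - 1) * (\<sigma> * \<tau> - A \<tau>) \<le> ee \<sigma>"
proof (cases "\<sigma> = 0")
  case True
  have "(real n - 1) * A \<tau> \<ge> 0" using A_nn[OF assms(2)] p_facts(4) by simp
  thus ?thesis using True ee_nn[of \<sigma>] by simp
next
  case False
  hence \<sigma>: "\<sigma> > 0" using assms by simp
  have "ennreal ((real n - 1) * (\<sigma> * \<tau> - A \<tau>)) \<le> ennreal (real n - 1) * ennreal (\<sigma> * \<tau> - A \<tau>)"
    using p_facts(4) by (intro ennreal_mult_le) simp
  also have "\<dots> \<le> ennreal (real n - 1) * At A \<sigma>" by (intro mult_left_mono At_ge assms(2)) simp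
  also have "\<dots> \<le> EE n A \<sigma>" by (rule EE_lower[OF \<sigma>])
  also have "\<dots> = ennreal (ee \<sigma>)" using EE_ee assms by simp
  finally show ?thesis using ee_nn[of \<sigma>] by simp
qed

lemma ee_lower2: assumes "0 < \<sigma>0" "\<sigma>0 \<le> \<sigma>" shows "(real n - 1) * (\<sigma> / \<sigma>0) * atr \<sigma>0 \<le> ee \<sigma>"
proof -
  have \<sigma>: "\<sigma> > 0" using assms by simp
  have "ennreal ((real n - 1) * (\<sigma> / \<sigma>0) * atr \<sigma>0) = ennreal (real n - 1) * (ennreal (\<sigma> / \<sigma>0) * At A \<sigma>0)"
  proof -
    have "ennreal ((real n - 1) * (\<sigma> / \<sigma>0) * atr \<sigma>0) = ennreal (real n - 1) * (ennreal (\<sigma> / \<sigma>0) * ennreal (atr \<sigma>0))"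
      using p_facts(4) assms by (simp add: ennreal_mult[symmetric] mult.assoc atr_def)
    thus ?thesis by (simp only: At_at)
  qed
  also have "\<dots> \<le> ennreal (real n - 1) * At A \<sigma>" by (intro mult_left_mono At_scale assms) simp
  also have "\<dots> \<le> EE n A \<sigma>" by (rule EE_lower[OF \<sigma>])
  also have "\<dots> = ennreal (ee \<sigma>)" using EE_ee \<sigma> by simp
  finally show ?thesis using ee_nn[of \<sigma>] by simp
qed

lemma lampow: assumes "0 < l" "\<sigma> \<ge> 0" shows "(l ^ (n - 1) * \<sigma>) powr p = l ^ n * \<sigma> powr p"
proof -
  have rn: "real (n - 1) = real n - 1" using n2 by (simp add: of_nat_diff)
  have "l ^ (n - 1) = l powr (real (n - 1))" using powr_realpow[OF assms(1), of "n-1"] by simp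
  hence "l ^ (n - 1) = l powr (real n - 1)" unfolding rn .
  hence "(l ^ (n - 1)) powr p = l powr ((real n - 1) * p)" by (simp add: powr_powr)
  also have "\<dots> = l ^ n" using p_facts(3) assms by (simp add: powr_realpow)
  finally show ?thesis using assms by (simp add: powr_mult)
qed

lemma ee_scale: assumes "0 < l" "l \<le> 1" "\<sigma> \<ge> 0" shows "l ^ n * ee \<sigma> \<le> ee (l ^ (n - 1) * \<sigma>)"
proof -
  have "l ^ (n - 1) * \<sigma> \<le> \<sigma>" using assms by (simp add: mult_left_le_one_le power_le_one)
  hence "II n A \<sigma> \<le> II n A (l ^ (n - 1) * \<sigma>)" by (rule II_anti)
  hence "ennreal (l ^ n) * EE n A \<sigma> \<le> EE n A (l ^ (n - 1) * \<sigma>)"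
    unfolding EE_def lampow[OF assms(1,3)] using assms
    by (simp add: ennreal_mult mult.assoc mult_left_mono)
  moreover have "ennreal (l ^ n) * EE n A \<sigma> = ennreal (l ^ n * ee \<sigma>)"
    using assms EE_ee ee_nn by (simp add: ennreal_mult)
  moreover have "EE n A (l ^ (n - 1) * \<sigma>) = ennreal (ee (l ^ (n - 1) * \<sigma>))"
    using assms by (intro EE_ee) simp
  ultimately show ?thesis using ee_nn by simp
qed

lemma atr_nn: "atr s \<ge> 0" unfolding atr_def by simp

lemma ee_strict:
  assumes l: "0 < l" "l < 1" and s1: "0 < \<sigma>1" "\<sigma>1 \<le> \<sigma>"
  shows "l ^ n * (ee \<sigma> + (1 - l ^ (n - 1)) * atr (l ^ (n - 1) * \<sigma>1)) \<le> ee (l ^ (n - 1) * \<sigma>)"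
proof -
  define L where "L = l ^ (n - 1)"
  have L: "0 < L" "L < 1" unfolding L_def using l n2 by (auto simp: power_less_one_iff)
  have \<sigma>: "\<sigma> > 0" using s1 by simp
  define a where "a = L * \<sigma>"
  have a: "0 < a" "a < \<sigma>" unfolding a_def using L \<sigma> by auto
  define K where "K = atr (L * \<sigma>1) * \<sigma> powr (-1 - p)"
  have K: "K \<ge> 0" unfolding K_def using atr_nn by simp
  define f where "f = (\<lambda>s. At A s * ennreal (s powr (-1 - p)))"
  have fm: "(\<lambda>s. f s * indicator {\<sigma>..} s) \<in> borel_measurable lborel"
    unfolding f_def At_at by measurable
  have "(\<integral>\<^sup>+ s. f s * indicator {\<sigma>..} s + ennreal K * indicator {a..<\<sigma>} s \<partial>lborel) \<le> II n A a"
    unfolding II_def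
  proof (intro nn_integral_mono)
    fix s :: real
    show "f s * indicator {\<sigma>..} s + ennreal K * indicator {a..<\<sigma>} s \<le> At A s * ennreal (s powr (-1 - p)) * indicator {a..} s"
    proof (cases "a \<le> s \<and> s < \<sigma>")
      case True
      hence s: "s > 0" using a by simp
      have "At A (L * \<sigma>1) \<le> At A s"
        using True s1 L unfolding a_def by (intro At_mono) (auto intro: order_trans[OF mult_left_mono])
      moreover have "\<sigma> powr (-1 - p) \<le> s powr (-1 - p)"
        using True s p_facts(1) by (intro powr_mono2') auto
      ultimately have "ennreal (atr (L * \<sigma>1)) * ennreal (\<sigma> powr (-1 - p)) \<le> At A s * ennreal (s powr (-1 - p))"
        unfolding At_at[of "L * \<sigma>1"] by (intro mult_mono) auto
      hence "ennreal K \<le> f s" unfolding K_def f_def using atr_nn by (simp add: ennreal_mult)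
      thus ?thesis using True unfolding f_def by simp
    next
      case False
      show ?thesis
      proof (cases "\<sigma> \<le> s")
        case True thus ?thesis using a unfolding f_def by simp
      next
        case False
        hence "s < a" using \<open>\<not> (a \<le> s \<and> s < \<sigma>)\<close> by simp
        thus ?thesis using a by simp
      qed
    qed
  qed
  moreover have "(\<integral>\<^sup>+ s. f s * indicator {\<sigma>..} s + ennreal K * indicator {a..<\<sigma>} s \<partial>lborel)
      = II n A \<sigma> + ennreal K * ennreal (\<sigma> - a)"
  proof -
    have m2: "(\<lambda>s::real. ennreal K * indicator {a..<\<sigma>} s) \<in> borel_measurable lborel" by measurable
    have "(\<integral>\<^sup>+ s. f s * indicator {\<sigma>..} s + ennreal K * indicator {a..<\<sigma>} s \<partial>lborel)
        = (\<integral>\<^sup>+ s. f s * indicator {\<sigma>..} s \<partial>lborel) + (\<integral>\<^sup>+ s. ennreal K * indicator {a..<\<sigma>} s \<partial>lborel)"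
      by (rule nn_integral_add[OF fm m2])
    also have "(\<integral>\<^sup>+ s. ennreal K * indicator {a..<\<sigma>} s \<partial>lborel) = ennreal K * emeasure lborel {a..<\<sigma>}"
      by (rule nn_integral_cmult_indicator) simp
    also have "emeasure lborel {a..<\<sigma>} = ennreal (\<sigma> - a)" using a by simp
    finally show ?thesis unfolding II_def f_def .
  qed
  ultimately have le: "II n A \<sigma> + ennreal K * ennreal (\<sigma> - a) \<le> II n A a" by simp
  have ap: "a powr p = l ^ n * \<sigma> powr p" unfolding a_def L_def using lampow[OF l(1), of \<sigma>] \<sigma> by simp
  have key: "\<sigma> powr p * (K * (\<sigma> - a)) = (1 - L) * atr (L * \<sigma>1)"
  proof -
    have "\<sigma> powr p * \<sigma> powr (-1 - p) = \<sigma> powr (-1)" by (simp add: powr_add[symmetric])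
    hence "\<sigma> powr p * \<sigma> powr (-1 - p) = 1 / \<sigma>" using \<sigma> by (simp add: powr_minus_divide)
    have "\<sigma> powr p * (K * (\<sigma> - a)) = atr (L * \<sigma>1) * (\<sigma> powr p * \<sigma> powr (-1 - p)) * (\<sigma> - a)"
      unfolding K_def by (simp add: ac_simps)
    also have "\<dots> = atr (L * \<sigma>1) * ((\<sigma> - a) / \<sigma>)" unfolding \<open>\<sigma> powr p * \<sigma> powr (-1 - p) = 1 / \<sigma>\<close> by simp
    finally have "\<sigma> powr p * (K * (\<sigma> - a)) = atr (L * \<sigma>1) * ((\<sigma> - a) / \<sigma>)" .
    also have "(\<sigma> - a) / \<sigma> = 1 - L" unfolding a_def using \<sigma> by (simp add: field_simps)
    finally show ?thesis by simp
  qed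
  have "ennreal (l ^ n * (ee \<sigma> + (1 - L) * atr (L * \<sigma>1)))
      = ennreal (l ^ n * \<sigma> powr p) * (II n A \<sigma> + ennreal K * ennreal (\<sigma> - a))"
  proof -
    have "ennreal (l ^ n * (ee \<sigma> + (1 - L) * atr (L * \<sigma>1))) = ennreal (l ^ n) * (ennreal (ee \<sigma>) + ennreal (\<sigma> powr p * (K * (\<sigma> - a))))"
      unfolding key using l L ee_nn atr_nn by (simp add: ennreal_mult ennreal_plus)
    also have "ennreal (ee \<sigma>) = ennreal (\<sigma> powr p) * II n A \<sigma>" using EE_ee[of \<sigma>] \<sigma> unfolding EE_def by simp
    also have "ennreal (\<sigma> powr p * (K * (\<sigma> - a))) = ennreal (\<sigma> powr p) * (ennreal K * ennreal (\<sigma> - a))"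
      using K a by (simp add: ennreal_mult)
    finally show ?thesis using l by (simp add: ennreal_mult distrib_left ac_simps)
  qed
  also have "\<dots> \<le> ennreal (a powr p) * II n A a" unfolding ap using le by (rule mult_left_mono) simp
  also have "\<dots> = ennreal (ee a)" using EE_ee[of a] a unfolding EE_def by simp
  finally show ?thesis unfolding L_def[symmetric] a_def using ee_nn by simp
qed

lemma ee_big: "\<exists>\<sigma>0>0. \<forall>\<sigma>. 0 < \<sigma> \<and> \<sigma> \<le> \<sigma>0 \<longrightarrow> M * \<sigma> powr p \<le> ee \<sigma>"
proof -
  obtain \<sigma>0 where s0: "\<sigma>0 > 0" "ennreal (max M 0) \<le> II n A \<sigma>0" using II_big by blast
  have "M * \<sigma> powr p \<le> ee \<sigma>" if "0 < \<sigma>" "\<sigma> \<le> \<sigma>0" for \<sigma>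
  proof -
    have "ennreal (max M 0) \<le> II n A \<sigma>" using s0(2) II_anti[OF that(2)] by simp
    hence "ennreal (\<sigma> powr p) * ennreal (max M 0) \<le> EE n A \<sigma>" unfolding EE_def by (rule mult_left_mono) simp
    hence "ennreal (\<sigma> powr p * max M 0) \<le> ennreal (ee \<sigma>)" using EE_ee[of \<sigma>] that by (simp add: ennreal_mult)
    hence "\<sigma> powr p * max M 0 \<le> ee \<sigma>" using ee_nn by simp
    moreover have "M * \<sigma> powr p \<le> max M 0 * \<sigma> powr p" by (intro mult_right_mono) auto
    hence "M * \<sigma> powr p \<le> \<sigma> powr p * max M 0" by (simp add: mult.commute)
    ultimately show ?thesis by linarith
  qed
  thus ?thesis using s0(1) by blast
qed

definition "Bf = (\<lambda>t. enn2real (funB n A t))"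

lemma B_term_le: assumes "\<sigma> \<ge> 0" "t \<ge> 0" shows "\<sigma> * t - ee \<sigma> \<le> (real n - 1) * A (t / (real n - 1))"
proof -
  have "(real n - 1) * (\<sigma> * (t / (real n - 1)) - A (t / (real n - 1))) \<le> ee \<sigma>"
    using assms p_facts(4) by (intro ee_lower) auto
  moreover have "(real n - 1) * (\<sigma> * (t / (real n - 1))) = \<sigma> * t" using p_facts(4) by simp
  ultimately show ?thesis by (simp add: right_diff_distrib)
qed

lemma B_fin: assumes "t \<ge> 0" shows "funB n A t < \<infinity>"
proof -
  have "funB n A t \<le> ennreal ((real n - 1) * A (t / (real n - 1)))"
    unfolding B_eq by (rule SUP_least) (use B_term_le assms in \<open>auto intro: ennreal_leI\<close>)
  thus ?thesis using le_less_trans by fastforce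
qed

lemma Bf_eq: "t \<ge> 0 \<Longrightarrow> funB n A t = ennreal (Bf t)"
  unfolding Bf_def using B_fin by simp

lemma Bf_nn: "Bf t \<ge> 0" unfolding Bf_def by simp

lemma B_ge: assumes "\<sigma> \<ge> 0" "t \<ge> 0" shows "\<sigma> * t - ee \<sigma> \<le> Bf t"
proof -
  have "ennreal (\<sigma> * t - ee \<sigma>) \<le> funB n A t" unfolding B_eq by (rule SUP_upper) (use assms in simp)
  thus ?thesis using Bf_eq[OF assms(2)] Bf_nn[of t] by simp
qed

lemma B_le: assumes "t \<ge> 0" "c \<ge> 0" "\<And>\<sigma>. \<sigma> \<ge> 0 \<Longrightarrow> \<sigma> * t - ee \<sigma> \<le> c" shows "Bf t \<le> c"
proof -
  have "funB n A t \<le> ennreal c" unfolding B_eq by (rule SUP_least) (use assms(3) in \<open>auto intro: ennreal_leI\<close>)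
  thus ?thesis using Bf_eq[OF assms(1)] assms(2) by simp
qed

lemma Bf0: "Bf 0 = 0"
  using B_le[of 0 0] ee_nn Bf_nn[of 0] by (simp add: antisym)

lemma Bf_convex: "convex_on {0..} Bf"
proof (rule convex_onI)
  fix t x y :: real assume t: "0 < t" "t < 1" and xy: "x \<in> {0..}" "y \<in> {0..}"
  show "Bf ((1 - t) *\<^sub>R x + t *\<^sub>R y) \<le> (1 - t) * Bf x + t * Bf y"
  proof (rule B_le)
    show "0 \<le> (1 - t) *\<^sub>R x + t *\<^sub>R y" using t xy by simp
    show "0 \<le> (1 - t) * Bf x + t * Bf y" using t Bf_nn by simp
    fix \<sigma> :: real assume \<sigma>: "\<sigma> \<ge> 0"
    have "\<sigma> * ((1 - t) *\<^sub>R x + t *\<^sub>R y) - ee \<sigma> = (1 - t) * (\<sigma> * x - ee \<sigma>) + t * (\<sigma> * y - ee \<sigma>)"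
      by (simp add: algebra_simps)
    also have "\<dots> \<le> (1 - t) * Bf x + t * Bf y"
      using t xy \<sigma> by (intro add_mono mult_left_mono B_ge) auto
    finally show "\<sigma> * ((1 - t) *\<^sub>R x + t *\<^sub>R y) - ee \<sigma> \<le> (1 - t) * Bf x + t * Bf y" .
  qed
qed (rule convex_real_interval)

lemma Bf_cont: "continuous_on {0..} Bf"
  by (rule conv_cont[OF Bf_convex Bf0 Bf_nn])

lemma Bf_lam: assumes l: "0 < l" "l \<le> 1" and y: "y \<ge> 0" shows "Bf (l * y) \<le> l ^ n * Bf y"
proof (rule B_le)
  show "0 \<le> l * y" using l y by simp
  show "0 \<le> l ^ n * Bf y" using l Bf_nn by simp
  fix \<sigma> :: real assume \<sigma>: "\<sigma> \<ge> 0"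
  define \<sigma>' where "\<sigma>' = \<sigma> / l ^ (n - 1)"
  have \<sigma>': "\<sigma> = l ^ (n - 1) * \<sigma>'" "\<sigma>' \<ge> 0" unfolding \<sigma>'_def using l \<sigma> by auto
  have ln: "l ^ (n - 1) * l = l ^ n" using n2 by (metis One_nat_def Suc_diff_le diff_Suc_1 le_add_diff_inverse2 one_le_numeral order_trans power_Suc2 le_add1)
  have "\<sigma> * (l * y) - ee \<sigma> = l ^ n * (\<sigma>' * y) - ee (l ^ (n - 1) * \<sigma>')"
    unfolding \<sigma>'(1) by (simp add: ln[symmetric] ac_simps)
  also have "\<dots> \<le> l ^ n * (\<sigma>' * y) - l ^ n * ee \<sigma>'" using ee_scale[OF l \<sigma>'(2)] by simp
  also have "\<dots> = l ^ n * (\<sigma>' * y - ee \<sigma>')" by (simp add: algebra_simps)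
  also have "\<dots> \<le> l ^ n * Bf y" using l \<sigma>'(2) y by (intro mult_left_mono B_ge) auto
  finally show "\<sigma> * (l * y) - ee \<sigma> \<le> l ^ n * Bf y" .
qed

lemma Bf_scale: assumes "0 < x" "x \<le> y" shows "Bf x * y ^ n \<le> x ^ n * Bf y"
proof -
  have y: "y > 0" using assms by simp
  have "Bf ((x / y) * y) \<le> (x / y) ^ n * Bf y" using assms y by (intro Bf_lam) auto
  hence "Bf x \<le> x ^ n / y ^ n * Bf y" using y by (simp add: power_divide)
  hence "Bf x * y ^ n \<le> x ^ n / y ^ n * Bf y * y ^ n" using y by (intro mult_right_mono) auto
  thus ?thesis using y by simp
qed

lemma Bf_strict: assumes xy: "0 < x" "x < y" and By: "Bf y > 0" shows "Bf x * y ^ n < x ^ n * Bf y"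
proof -
  have y: "y > 0" using xy by simp
  define l where "l = x / y"
  have l: "0 < l" "l < 1" unfolding l_def using xy by auto
  define \<sigma>1 where "\<sigma>1 = Bf y / (2 * y)"
  have s1: "\<sigma>1 > 0" unfolding \<sigma>1_def using By y by simp
  define \<kappa> where "\<kappa> = (1 - l ^ (n - 1)) * atr (l ^ (n - 1) * \<sigma>1)"
  have "l ^ (n - 1) < 1" using l n2 by (auto simp: power_less_one_iff)
  moreover have "atr (l ^ (n - 1) * \<sigma>1) > 0"
  proof -
    have "At A (l ^ (n - 1) * \<sigma>1) > 0" using l s1 by (intro At_pos) simp
    thus ?thesis unfolding At_at by simp
  qed
  ultimately have \<kappa>: "\<kappa> > 0" unfolding \<kappa>_def by simp
  define m where "m = max (Bf y - \<kappa>) (Bf y / 2)"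
  have m: "m < Bf y" "m \<ge> 0" unfolding m_def using \<kappa> By by auto
  have ln: "l ^ (n - 1) * l = l ^ n" using n2 by (metis One_nat_def Suc_diff_le diff_Suc_1 le_add_diff_inverse2 one_le_numeral order_trans power_Suc2 le_add1)
  have "Bf (l * y) \<le> l ^ n * m"
  proof (rule B_le)
    show "0 \<le> l * y" using l y by simp
    show "0 \<le> l ^ n * m" using l m by simp
    fix \<sigma> :: real assume \<sigma>: "\<sigma> \<ge> 0"
    define \<sigma>' where "\<sigma>' = \<sigma> / l ^ (n - 1)"
    have \<sigma>': "\<sigma> = l ^ (n - 1) * \<sigma>'" "\<sigma>' \<ge> 0" unfolding \<sigma>'_def using l \<sigma> by auto
    have eq: "\<sigma> * (l * y) = l ^ n * (\<sigma>' * y)" unfolding \<sigma>'(1) by (simp add: ln[symmetric] ac_simps)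
    show "\<sigma> * (l * y) - ee \<sigma> \<le> l ^ n * m"
    proof (cases "\<sigma>1 \<le> \<sigma>'")
      case True
      have "l ^ n * (ee \<sigma>' + \<kappa>) \<le> ee \<sigma>" unfolding \<sigma>'(1) \<kappa>_def by (rule ee_strict[OF l s1 True])
      hence "\<sigma> * (l * y) - ee \<sigma> \<le> l ^ n * (\<sigma>' * y - ee \<sigma>' - \<kappa>)" unfolding eq by (simp add: algebra_simps)
      also have "\<dots> \<le> l ^ n * (Bf y - \<kappa>)" using B_ge[OF \<sigma>'(2), of y] y l by (intro mult_left_mono) auto
      also have "\<dots> \<le> l ^ n * m" unfolding m_def using l by (intro mult_left_mono) auto
      finally show ?thesis .
    next
      case False
      have "\<sigma> * (l * y) - ee \<sigma> \<le> l ^ n * (\<sigma>' * y)" unfolding eq using ee_nn[of \<sigma>] by simp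
      also have "\<dots> \<le> l ^ n * (\<sigma>1 * y)" using False l y by (intro mult_left_mono mult_right_mono) auto
      also have "\<sigma>1 * y = Bf y / 2" unfolding \<sigma>1_def using y by simp
      also have "l ^ n * (Bf y / 2) \<le> l ^ n * m" unfolding m_def using l by (intro mult_left_mono) auto
      finally show ?thesis .
    qed
  qed
  also have "\<dots> < l ^ n * Bf y" using m l by simp
  finally have "Bf x < x ^ n / y ^ n * Bf y" unfolding l_def using y by (simp add: power_divide)
  hence "Bf x * y ^ n < x ^ n / y ^ n * Bf y * y ^ n" using y by (intro mult_strict_right_mono) auto
  thus ?thesis using y by simp
qed

lemma Bf_pos: "\<exists>y>0. Bf y > 0"
proof -
  define y where "y = ee 1 + 1"
  have y: "y > 0" unfolding y_def using ee_nn[of 1] by simp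
  have "1 * y - ee 1 \<le> Bf y" using y by (intro B_ge) auto
  hence "Bf y \<ge> 1" unfolding y_def by simp
  thus ?thesis using y by (intro exI[of _ y]) auto
qed

lemma young_ineq: assumes "\<sigma> \<ge> 0" "b \<ge> 0" "M > 0" shows "\<sigma> * b - M * \<sigma> powr p \<le> b ^ n / M ^ (n - 1)"
proof (cases "\<sigma> = 0")
  case True thus ?thesis using assms p_facts(1) by simp
next
  case False
  hence \<sigma>: "\<sigma> > 0" using assms by simp
  define q where "q = \<sigma> powr (1 / (real n - 1))"
  have q: "q > 0" unfolding q_def using \<sigma> by simp
  have sp: "\<sigma> powr p = \<sigma> * q"
  proof -
    have "\<sigma> powr p = \<sigma> powr (1 + (p - 1))" by simp
    also have "\<dots> = \<sigma> powr 1 * \<sigma> powr (p - 1)" by (rule powr_add)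
    also have "\<dots> = \<sigma> * \<sigma> powr (p - 1)" using \<sigma> by simp
    finally show ?thesis unfolding q_def p_facts(2) .
  qed
  have qn: "q ^ (n - 1) = \<sigma>"
  proof -
    have rn: "real (n - 1) = real n - 1" using n2 by (simp add: of_nat_diff)
    have "q ^ (n - 1) = q powr real (n - 1)" using q by (simp add: powr_realpow)
    also have "\<dots> = \<sigma> powr (1 / (real n - 1) * (real n - 1))" unfolding q_def rn by (simp add: powr_powr)
    also have "\<dots> = \<sigma>" using p_facts(4) \<sigma> by simp
    finally show ?thesis .
  qed
  have bn: "b ^ n = b * b ^ (n - 1)" using n2 by (metis One_nat_def Suc_diff_le diff_Suc_1 le_add_diff_inverse2 one_le_numeral order_trans power_Suc le_add1)
  show ?thesis
  proof (cases "b \<le> M * q")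
    case True
    have "\<sigma> * b \<le> \<sigma> * (M * q)" using True \<sigma> by (intro mult_left_mono) auto
    hence "\<sigma> * b - M * \<sigma> powr p \<le> 0" unfolding sp by (simp add: ac_simps)
    moreover have "b ^ n / M ^ (n - 1) \<ge> 0" using assms by simp
    ultimately show ?thesis by linarith
  next
    case False
    hence "q \<le> b / M" using assms by (simp add: field_simps)
    hence "q ^ (n - 1) \<le> (b / M) ^ (n - 1)" using q by (intro power_mono) auto
    hence "\<sigma> \<le> (b / M) ^ (n - 1)" unfolding qn .
    hence "\<sigma> * b \<le> (b / M) ^ (n - 1) * b" using assms by (intro mult_right_mono) auto
    also have "\<dots> = b ^ n / M ^ (n - 1)" unfolding bn by (simp add: power_divide)
    finally show ?thesis using \<sigma> assms by (smt (verit) mult_nonneg_nonneg powr_ge_zero)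
  qed
qed

lemma Bf_small: "((\<lambda>b. Bf b / b ^ n) \<longlongrightarrow> 0) (at_right 0)"
proof (rule order_tendstoI)
  fix a :: real assume "a < 0"
  thus "eventually (\<lambda>b. a < Bf b / b ^ n) (at_right 0)"
    by (auto simp: eventually_at_right_field intro!: exI[of _ 1] less_le_trans[OF _ divide_nonneg_nonneg[OF Bf_nn]])
next
  fix \<epsilon> :: real assume \<epsilon>: "0 < \<epsilon>"
  define M where "M = (2 / \<epsilon>) powr (1 / (real n - 1))"
  have M: "M > 0" unfolding M_def using \<epsilon> by simp
  have Mn: "M ^ (n - 1) = 2 / \<epsilon>"
  proof -
    have rn: "real (n - 1) = real n - 1" using n2 by (simp add: of_nat_diff)
    have "M ^ (n - 1) = M powr real (n - 1)" using M by (simp add: powr_realpow)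
    also have "\<dots> = (2 / \<epsilon>) powr (1 / (real n - 1) * (real n - 1))" unfolding M_def rn by (simp add: powr_powr)
    also have "\<dots> = 2 / \<epsilon>" using p_facts(4) \<epsilon> by simp
    finally show ?thesis .
  qed
  obtain \<sigma>0 where s0: "\<sigma>0 > 0" "\<And>\<sigma>. 0 < \<sigma> \<and> \<sigma> \<le> \<sigma>0 \<Longrightarrow> M * \<sigma> powr p \<le> ee \<sigma>"
    using ee_big[of M] by blast
  define \<delta> where "\<delta> = (real n - 1) * atr \<sigma>0 / \<sigma>0"
  have "atr \<sigma>0 > 0" using At_pos[OF s0(1)] unfolding At_at by simp
  hence \<delta>: "\<delta> > 0" unfolding \<delta>_def using s0(1) p_facts(4) by simp
  have bound: "Bf b \<le> b ^ n / M ^ (n - 1)" if b: "0 < b" "b < \<delta>" for b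
  proof (rule B_le)
    show "0 \<le> b" "0 \<le> b ^ n / M ^ (n - 1)" using b M by auto
    fix \<sigma> :: real assume \<sigma>: "\<sigma> \<ge> 0"
    show "\<sigma> * b - ee \<sigma> \<le> b ^ n / M ^ (n - 1)"
    proof (cases "\<sigma> \<le> \<sigma>0")
      case True
      have "M * \<sigma> powr p \<le> ee \<sigma>"
      proof (cases "\<sigma> = 0")
        case True thus ?thesis using ee0 p_facts(1) by simp
      qed (use s0(2) True \<sigma> in auto)
      thus ?thesis using young_ineq[OF \<sigma> _ M, of b] b by simp
    next
      case False
      have "(real n - 1) * (\<sigma> / \<sigma>0) * atr \<sigma>0 \<le> ee \<sigma>" using False s0(1) by (intro ee_lower2) auto
      moreover have "(real n - 1) * (\<sigma> / \<sigma>0) * atr \<sigma>0 = \<sigma> * \<delta>" unfolding \<delta>_def by simp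
      ultimately have "\<sigma> * b - ee \<sigma> \<le> \<sigma> * b - \<sigma> * \<delta>" by simp
      also have "\<dots> \<le> 0" using \<sigma> b by (simp add: mult_left_mono right_diff_distrib[symmetric] mult_nonneg_nonpos)
      also have "\<dots> \<le> b ^ n / M ^ (n - 1)" using b M by simp
      finally show ?thesis .
    qed
  qed
  show "eventually (\<lambda>b. Bf b / b ^ n < \<epsilon>) (at_right 0)"
    unfolding eventually_at_right_field
  proof (intro exI[of _ \<delta>] conjI allI impI)
    show "0 < \<delta>" by (rule \<delta>)
    fix b :: real assume b: "0 < b" "b < \<delta>"
    have "Bf b / b ^ n \<le> 1 / M ^ (n - 1)" using bound[OF b] b by (simp add: divide_le_eq)
    also have "\<dots> = \<epsilon> / 2" unfolding Mn by simp
    finally have "Bf b / b ^ n \<le> \<epsilon> / 2" .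
    thus "Bf b / b ^ n < \<epsilon>" using \<epsilon> by linarith
  qed
qed


lemma case_two:
  fixes \<phi> :: "real \<Rightarrow> real"
  assumes gauge: "gauge_function n \<phi>"
  shows "\<forall>s t. 0 < s \<and> 0 < t \<longrightarrow>
           ennreal (funPsi n A \<phi> (s * t)) \<le> ennreal (\<phi> t) + ennreal (t ^ n) * funB n A s"
proof (rule core[where Bf = Bf])
  show "1 \<le> n" using n2 by simp
  show "gauge_function n \<phi>" by fact
  show "\<And>t. 0 \<le> t \<Longrightarrow> funB n A t = ennreal (Bf t)" by (rule Bf_eq)
  show "\<And>t. 0 \<le> t \<Longrightarrow> 0 \<le> Bf t" by (rule Bf_nn)
  show "Bf 0 = 0" by (rule Bf0)
  show "continuous_on {0..} Bf" by (rule Bf_cont)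
  show "\<And>x y. 0 < x \<Longrightarrow> x \<le> y \<Longrightarrow> Bf x * y ^ n \<le> x ^ n * Bf y" by (rule Bf_scale)
  show "\<And>x y. 0 < x \<Longrightarrow> x < y \<Longrightarrow> 0 < Bf y \<Longrightarrow> Bf x * y ^ n < x ^ n * Bf y" by (rule Bf_strict)
  show "\<exists>y>0. 0 < Bf y" by (rule Bf_pos)
  show "((\<lambda>b. Bf b / b ^ n) \<longlongrightarrow> 0) (at_right 0)" by (rule Bf_small)
qed

end

theorem lemma4p4:
  fixes n :: nat and A \<phi> :: "real \<Rightarrow> real"
  assumes "n \<ge> 1"
    and "young_function A" and "cond_C1 n A" and "cond_C2 A" and "cond_C3 n A"
    and "gauge_function n \<phi>"
  shows "\<forall>s t. 0 < s \<and> 0 < t \<longrightarrow>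
           ennreal (funPsi n A \<phi> (s * t)) \<le> ennreal (\<phi> t) + ennreal (t ^ n) * funB n A s"
proof (cases "n = 1")
  case True
  thus ?thesis using case_one[of A \<phi>] assms by simp
next
  case False
  hence "n \<ge> 2" using assms(1) by simp
  thus ?thesis using case_two[of n A \<phi>] assms by simp
qed

end
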